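(* Let $0\le\ell\le n$ and $\mu\in P^+_{\ell,n}$. For $1\le r\le n-1$ let $A_r,D_r$ be the components of $A,D$ of total degree $r$ in $\omega_2,\omega_4,\omega_6$. Then \[ A_rv_\mu=\sum_{\substack{\lambda\in P^+_{\ell,n}\\ \lambda/\mu=b,\ |b|=r}}\Omega(b)\,v_\lambda,\qquad D_rv_\mu=\sum_{\substack{\lambda\in P^+_{\ell,n}\\ \mu/\lambda=b,\ |b|=n-r}}\overline{\Omega}(b)\,v_\lambda, \] where the sums run over $\lambda\in P^+_{\ell,n}$ such that $\lambda/\mu$ (resp. $\mu/\lambda$) is a broken rim hook $b$ of length $r$ (resp. $n-r$). The first formula also holds for $A_0$ and the second for $D_n$, where the empty skew diagram ($\lambda=\mu$) is admitted as a broken rim hook.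
   Context: Let $V=\mathbb{C}v_0\oplus\mathbb{C}v_1$, $e_{ab}$ the matrix units ($e_{ab}v_c=\delta_{bc}v_a$). For indeterminates $\omega=(\omega_1,\dots,\omega_6)$ let $R(\omega)=e_{00}\otimes(\omega_1e_{00}+\omega_3e_{11})+e_{01}\otimes\omega_5e_{10}+e_{10}\otimes\omega_6e_{01}+e_{11}\otimes(\omega_4e_{00}+\omega_2e_{11})\in\operatorname{End}(V\otimes V)\otimes\mathbb{C}[\omega]$. On $V_0\otimes V^{\otimes n}$ ($V_0$ an auxiliary copy of $V$) let $T(\omega)=R_{0n}(\omega)\cdots R_{01}(\omega)$ and write $T=e_{00}\otimes A+e_{01}\otimes B+e_{10}\otimes C+e_{11}\otimes D$. For a binary string $\sigma\in\{0,1\}^n$ with 1's exactly at positions $i_1<\dots<i_\ell$, $v_\sigma=v_{\sigma_1}\otimes\cdots\otimes v_{\sigma_n}$ is labelled $v_\lambda$ with $\lambda=(i_\ell-\ell,i_{\ell-1}-(\ell-1),\dots,i_1-1)\in P^+_{\ell,n}$, the partitions with at most $\ell$ parts, all $\le n-\ell$. A broken rim hook is a skew diagram $b=\lambda/\mu$ ($\mu\subset\lambda$) containing no $2\times2$ block of boxes; its edge-connected components are (connected) rim hooks $h$, $\#b$ is their number, $|b|$ the number of boxes, $r(h)$, $c(h)$ the numbers of rows and columns $h$ occupies. For $\lambda,\mu\in P^+_{\ell,n}$, $\bar r(b)$ is the number of rows $1\le i\le\ell$ containing no box of $b$ and $\bar c(b)$ the number of columns $1\le j\le n-\ell$ containing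 no box of $b$. Set $\Omega(b)=\Omega(b;\omega)=\omega_1^{\bar c(b)}\omega_3^{\bar r(b)}(\omega_5\omega_6)^{\#b}\prod_{h\in b}\omega_2^{r(h)-1}\omega_4^{c(h)-1}$ and $\overline{\Omega}(b;\omega_1,\dots,\omega_6)=\Omega(b;\omega_4,\omega_3,\omega_2,\omega_1,\omega_6,\omega_5)$. *)

theory Defs
  imports Complex_Main "HOL-Library.Poly_Mapping" "HOL-Library.Function_Algebras"
begin

text \<open>Multivariate polynomials with complex coefficients: finitely supported maps
  from monomials (exponent vectors \<open>nat \<Rightarrow>\<^sub>0 nat\<close>, variable \<open>\<omega>_i\<close> has index i)
  to coefficients.\<close>
type_synonym mpoly = "(nat \<Rightarrow>\<^sub>0 nat) \<Rightarrow>\<^sub>0 complex"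

definition omega :: "nat \<Rightarrow> mpoly" where
  "omega i = Poly_Mapping.single (Poly_Mapping.single i 1) 1"

definition deg246 :: "(nat \<Rightarrow>\<^sub>0 nat) \<Rightarrow> nat" where
  "deg246 m = Poly_Mapping.lookup m 2 + Poly_Mapping.lookup m 4 + Poly_Mapping.lookup m 6"

definition hcomp :: "nat \<Rightarrow> mpoly \<Rightarrow> mpoly" where
  "hcomp r p = Poly_Mapping.mapp (\<lambda>m c. if deg246 m = r then c else 0) p"

text \<open>A 2x2 matrix is a function of (row, column) indices in {0,1}.\<close>
definition eu :: "nat \<Rightarrow> nat \<Rightarrow> nat \<Rightarrow> nat \<Rightarrow> mpoly" where
  "eu a b = (\<lambda>i j. if i = a \<and> j = b then 1 else 0)"

text \<open>Tensor product of two 2x2 matrices, as an operator on V \<otimes> V: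
  entry \<open>\<langle>v_a \<otimes> v_b | X \<otimes> Y | v_c \<otimes> v_d\<rangle> = X a c * Y b d\<close>.\<close>
definition tens :: "(nat \<Rightarrow> nat \<Rightarrow> mpoly) \<Rightarrow> (nat \<Rightarrow> nat \<Rightarrow> mpoly)
    \<Rightarrow> nat \<Rightarrow> nat \<Rightarrow> nat \<Rightarrow> nat \<Rightarrow> mpoly" where
  "tens X Y = (\<lambda>a b c d. X a c * Y b d)"

definition madd :: "(nat \<Rightarrow> nat \<Rightarrow> mpoly) \<Rightarrow> (nat \<Rightarrow> nat \<Rightarrow> mpoly) \<Rightarrow> nat \<Rightarrow> nat \<Rightarrow> mpoly" where
  "madd X Y = (\<lambda>i j. X i j + Y i j)"

definition msmult :: "mpoly \<Rightarrow> (nat \<Rightarrow> nat \<Rightarrow> mpoly) \<Rightarrow> nat \<Rightarrow> nat \<Rightarrow> mpoly" where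
  "msmult c X = (\<lambda>i j. c * X i j)"

text \<open>R(\<omega>) = e00\<otimes>(\<omega>1 e00 + \<omega>3 e11) + e01\<otimes>\<omega>5 e10 + e10\<otimes>\<omega>6 e01 + e11\<otimes>(\<omega>4 e00 + \<omega>2 e11);
  \<open>Rmat a b c d = \<langle>v_a \<otimes> v_b | R | v_c \<otimes> v_d\<rangle>\<close> (first factor = auxiliary space).\<close>
definition Rmat :: "nat \<Rightarrow> nat \<Rightarrow> nat \<Rightarrow> nat \<Rightarrow> mpoly" where
  "Rmat = (\<lambda>a b c d.
      tens (eu 0 0) (madd (msmult (omega 1) (eu 0 0)) (msmult (omega 3) (eu 1 1))) a b c d
    + tens (eu 0 1) (msmult (omega 5) (eu 1 0)) a b c d
    + tens (eu 1 0) (msmult (omega 6) (eu 0 1)) a b c d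
    + tens (eu 1 1) (madd (msmult (omega 4) (eu 0 0)) (msmult (omega 2) (eu 1 1))) a b c d)"

text \<open>Matrix entries of the monodromy matrix \<open>T = R_{0n} \<cdots> R_{01}\<close> on \<open>V_0 \<otimes> V^{\<otimes>n}\<close>:
  \<open>Tmat \<tau> \<sigma> b a = \<langle>v_b \<otimes> v_\<tau> | T | v_a \<otimes> v_\<sigma>\<rangle>\<close>, where strings are lists of 0/1.
  Since \<open>T = (R_{0n} \<cdots> R_{02}) R_{01}\<close>, the recursion peels off site 1 (the head).\<close>
fun Tmat :: "nat list \<Rightarrow> nat list \<Rightarrow> nat \<Rightarrow> nat \<Rightarrow> mpoly" where
  "Tmat [] [] b a = (if b = a then 1 else 0)"
| "Tmat (y # ys) (x # xs) b a = (\<Sum>c\<in>{0,1}. Tmat ys xs b c * Rmat c y a x)"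
| "Tmat _ _ b a = 0"

text \<open>T = e00\<otimes>A + e01\<otimes>B + e10\<otimes>C + e11\<otimes>D, so A and D are the (0,0) and (1,1) blocks.\<close>
definition Aop :: "nat list \<Rightarrow> nat list \<Rightarrow> mpoly" where
  "Aop \<tau> \<sigma> = Tmat \<tau> \<sigma> 0 0"

definition Dop :: "nat list \<Rightarrow> nat list \<Rightarrow> mpoly" where
  "Dop \<tau> \<sigma> = Tmat \<tau> \<sigma> 1 1"

definition strings :: "nat \<Rightarrow> nat list set" where
  "strings n = {\<sigma>. length \<sigma> = n \<and> set \<sigma> \<subseteq> {0, 1}}"

text \<open>A vector is given by its coordinates in the basis \<open>v_\<sigma>\<close>, \<open>\<sigma> \<in> strings n\<close>;
  an operator by its matrix; application to a vector:\<close>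
definition opapply :: "nat \<Rightarrow> (nat list \<Rightarrow> nat list \<Rightarrow> mpoly) \<Rightarrow> (nat list \<Rightarrow> mpoly) \<Rightarrow> nat list \<Rightarrow> mpoly" where
  "opapply n M v = (\<lambda>\<tau>. \<Sum>\<sigma>\<in>strings n. M \<tau> \<sigma> * v \<sigma>)"

definition Acomp :: "nat \<Rightarrow> nat list \<Rightarrow> nat list \<Rightarrow> mpoly" where
  "Acomp r \<tau> \<sigma> = hcomp r (Aop \<tau> \<sigma>)"

definition Dcomp :: "nat \<Rightarrow> nat list \<Rightarrow> nat list \<Rightarrow> mpoly" where
  "Dcomp r \<tau> \<sigma> = hcomp r (Dop \<tau> \<sigma>)"

text \<open>A partition is a function \<open>\<lambda> :: nat \<Rightarrow> nat\<close> with parts \<open>\<lambda> 1 \<ge> \<lambda> 2 \<ge> \<dots>\<close>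
  (index 0 unused, set to 0). \<open>P^+_{l,n}\<close>: at most \<open>l\<close> parts, all \<open>\<le> n - l\<close>.\<close>
definition Ppart :: "nat \<Rightarrow> nat \<Rightarrow> (nat \<Rightarrow> nat) set" where
  "Ppart l n = {la. (\<forall>i\<ge>1. la (i + 1) \<le> la i) \<and> la 0 = 0 \<and> (\<forall>i>l. la i = 0)
                 \<and> (\<forall>i. la i \<le> n - l)}"

text \<open>Positions (1-indexed, increasing) of the 1's in a string: \<open>i_1 < \<dots> < i_l\<close>.\<close>
definition onepos :: "nat list \<Rightarrow> nat list" where
  "onepos \<sigma> = [p + 1. p \<leftarrow> [0..<length \<sigma>], \<sigma> ! p = 1]"

text \<open>Label \<open>\<lambda> = (i_l - l, i_{l-1} - (l-1), \<dots>, i_1 - 1)\<close>, i.e.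
  \<open>\<lambda>_j = i_{l+1-j} - (l+1-j)\<close>.\<close>
definition label :: "nat list \<Rightarrow> nat \<Rightarrow> nat" where
  "label \<sigma> = (\<lambda>j. let ps = onepos \<sigma>; l = length ps in
      if 1 \<le> j \<and> j \<le> l then ps ! (l - j) - (l + 1 - j) else 0)"

definition vlam :: "nat \<Rightarrow> nat \<Rightarrow> (nat \<Rightarrow> nat) \<Rightarrow> nat list \<Rightarrow> mpoly" where
  "vlam n l la = (\<lambda>\<tau>. if \<tau> \<in> strings n \<and> length (onepos \<tau>) = l \<and> label \<tau> = la then 1 else 0)"

definition diagram :: "(nat \<Rightarrow> nat) \<Rightarrow> (nat \<times> nat) set" where
  "diagram la = {(i, j). 1 \<le> i \<and> 1 \<le> j \<and> j \<le> la i}"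

definition contained :: "(nat \<Rightarrow> nat) \<Rightarrow> (nat \<Rightarrow> nat) \<Rightarrow> bool" where
  "contained \<mu> la \<longleftrightarrow> (\<forall>i. \<mu> i \<le> la i)"

text \<open>The skew diagram \<open>\<lambda>/\<mu>\<close> (meaningful when \<open>\<mu> \<subseteq> \<lambda>\<close>).\<close>
definition skew :: "(nat \<Rightarrow> nat) \<Rightarrow> (nat \<Rightarrow> nat) \<Rightarrow> (nat \<times> nat) set" where
  "skew la \<mu> = diagram la - diagram \<mu>"

definition broken_rim_hook :: "(nat \<times> nat) set \<Rightarrow> bool" where
  "broken_rim_hook b \<longleftrightarrow>
     \<not> (\<exists>i j. (i, j) \<in> b \<and> (i + 1, j) \<in> b \<and> (i, j + 1) \<in> b \<and> (i + 1, j + 1) \<in> b)"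

definition adj_in :: "(nat \<times> nat) set \<Rightarrow> ((nat \<times> nat) \<times> (nat \<times> nat)) set" where
  "adj_in b = {((i, j), (i', j')). (i, j) \<in> b \<and> (i', j') \<in> b \<and>
      ((i = i' \<and> (j' = j + 1 \<or> j = j' + 1)) \<or> (j = j' \<and> (i' = i + 1 \<or> i = i' + 1)))}"

definition components :: "(nat \<times> nat) set \<Rightarrow> (nat \<times> nat) set set" where
  "components b = {{y \<in> b. (x, y) \<in> (adj_in b)\<^sup>*} | x. x \<in> b}"

definition nrows :: "(nat \<times> nat) set \<Rightarrow> nat" where
  "nrows h = card (fst ` h)"

definition ncols :: "(nat \<times> nat) set \<Rightarrow> nat" where
  "ncols h = card (snd ` h)"

definition rbar :: "nat \<Rightarrow> (nat \<times> nat) set \<Rightarrow> nat" where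
  "rbar l b = card {i \<in> {1..l}. \<forall>j. (i, j) \<notin> b}"

definition cbar :: "nat \<Rightarrow> nat \<Rightarrow> (nat \<times> nat) set \<Rightarrow> nat" where
  "cbar l n b = card {j \<in> {1..n - l}. \<forall>i. (i, j) \<notin> b}"

definition Omega_gen :: "(nat \<Rightarrow> mpoly) \<Rightarrow> nat \<Rightarrow> nat \<Rightarrow> (nat \<times> nat) set \<Rightarrow> mpoly" where
  "Omega_gen w l n b = w 1 ^ cbar l n b * w 3 ^ rbar l b * (w 5 * w 6) ^ card (components b)
     * (\<Prod>h\<in>components b. w 2 ^ (nrows h - 1) * w 4 ^ (ncols h - 1))"

definition Omega :: "nat \<Rightarrow> nat \<Rightarrow> (nat \<times> nat) set \<Rightarrow> mpoly" where
  "Omega l n b = Omega_gen omega l n b"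

definition Omegabar :: "nat \<Rightarrow> nat \<Rightarrow> (nat \<times> nat) set \<Rightarrow> mpoly" where
  "Omegabar l n b = Omega_gen
     (\<lambda>i. if i = 1 then omega 4 else if i = 2 then omega 3 else if i = 3 then omega 2
          else if i = 4 then omega 1 else if i = 5 then omega 6 else if i = 6 then omega 5 else 0)
     l n b"

end

theory Submission
  imports Defs
begin


definition cnt :: "nat list \<Rightarrow> nat" where "cnt s = length (onepos s)"

lemma onepos_Nil[simp]: "onepos [] = []" by (simp add: onepos_def)

lemma onepos_Cons: "onepos (x # s) = (if x = 1 then 1 # map Suc (onepos s) else map Suc (onepos s))"
proof -
  have "[0..<length (x#s)] = 0 # map Suc [0..<length s]"
    by (simp add: map_Suc_upt upt_conv_Cons del: upt_Suc)
  then show ?thesis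
    unfolding onepos_def by (simp add: comp_def map_concat del: upt_Suc; intro arg_cong[where f=concat] map_cong; simp)
qed

lemma cnt_Nil[simp]: "cnt [] = 0" by (simp add: cnt_def)
lemma cnt_Cons: "cnt (x # s) = (if x = 1 then Suc (cnt s) else cnt s)"
  by (simp add: cnt_def onepos_Cons)
lemma cnt_Cons1[simp]: "cnt (1 # s) = Suc (cnt s)" by (simp add: cnt_Cons)
lemma cnt_Cons0[simp]: "cnt (0 # s) = cnt s" by (simp add: cnt_Cons)
lemma cnt_le: "cnt s \<le> length s"
  by (induction s) (auto simp: cnt_Cons)

lemma onepos_ge: "k < cnt s \<Longrightarrow> Suc k \<le> onepos s ! k"
proof (induction s arbitrary: k)
  case Nil then show ?case by (simp add: cnt_def)
next
  case (Cons x s)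
  show ?case
  proof (cases "x = 1")
    case True
    then show ?thesis using Cons by (cases k) (auto simp: onepos_Cons cnt_def)
  next
    case False
    then show ?thesis using Cons by (auto simp: onepos_Cons cnt_def nth_map intro: Suc_leD)
  qed
qed

definition sh :: "nat \<Rightarrow> (nat \<Rightarrow> nat) \<Rightarrow> nat \<Rightarrow> nat" where
  "sh l f = (\<lambda>j. if 1 \<le> j \<and> j \<le> l then f j + 1 else 0)"

lemma label_alt: "label s j = (if 1 \<le> j \<and> j \<le> cnt s then onepos s ! (cnt s - j) - (cnt s + 1 - j) else 0)"
  by (simp add: label_def cnt_def Let_def)

lemma label_supp: "j = 0 \<or> cnt s < j \<Longrightarrow> label s j = 0"
  by (auto simp: label_alt)

lemma label_Cons1[simp]: "label (1 # s) = label s"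
proof
  fix j
  show "label (1 # s) j = label s j"
  proof (cases "1 \<le> j \<and> j \<le> cnt s")
    case True
    then have "Suc (cnt s) - j = Suc (cnt s - j)" by auto
    moreover have "cnt s - j < length (onepos s)" using True by (auto simp add: cnt_def)
    ultimately show ?thesis using True by (simp add: label_alt onepos_Cons cnt_def nth_map)
  next
    case False
    then show ?thesis by (auto simp: label_alt onepos_Cons cnt_def le_Suc_eq)
  qed
qed

lemma label_Cons0: "x \<noteq> 1 \<Longrightarrow> label (x # s) = sh (cnt s) (label s)"
proof
  fix j assume x: "x \<noteq> 1"
  show "label (x # s) j = sh (cnt s) (label s) j"
  proof (cases "1 \<le> j \<and> j \<le> cnt s")
    case True
    have "Suc (cnt s - j) \<le> onepos s ! (cnt s - j)"
      using onepos_ge[of "cnt s - j" s] True by auto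
    moreover have "cnt s - j < length (onepos s)" using True by (auto simp add: cnt_def)
    ultimately show ?thesis using True x by (simp add: label_alt onepos_Cons cnt_def sh_def nth_map)
  next
    case False
    then show ?thesis using x by (auto simp: label_alt onepos_Cons cnt_def sh_def)
  qed
qed

lemma label_Cons0'[simp]: "label (0 # s) = sh (cnt s) (label s)"
  by (simp add: label_Cons0)


definition adjb :: "nat \<times> nat \<Rightarrow> nat \<times> nat \<Rightarrow> bool" where
  "adjb p q \<longleftrightarrow> (fst p = fst q \<and> (snd q = snd p + 1 \<or> snd p = snd q + 1)) \<or>
                (snd p = snd q \<and> (fst q = fst p + 1 \<or> fst p = fst q + 1))"

lemma adjb_sym: "adjb p q = adjb q p" by (auto simp: adjb_def)
lemma adjb_irrefl[simp]: "\<not> adjb p p" by (auto simp: adjb_def)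

lemma mem_adj_in: "(x, y) \<in> adj_in b \<longleftrightarrow> x \<in> b \<and> y \<in> b \<and> adjb x y"
  by (cases x; cases y) (auto simp: adj_in_def adjb_def)

definition compo :: "(nat \<times> nat) set \<Rightarrow> nat \<times> nat \<Rightarrow> (nat \<times> nat) set" where
  "compo b x = {y \<in> b. (x, y) \<in> (adj_in b)\<^sup>*}"

lemma components_compo: "components b = compo b ` b"
  by (auto simp: components_def compo_def)

lemma sym_adj_in: "sym (adj_in b)"
  by (auto simp: sym_def mem_adj_in adjb_sym)

lemma adj_in_rtrancl_sym: "(x, y) \<in> (adj_in b)\<^sup>* \<Longrightarrow> (y, x) \<in> (adj_in b)\<^sup>*"
  by (rule symD[OF sym_rtrancl[OF sym_adj_in]])

lemma adj_in_rtrancl_mem: "(x, y) \<in> (adj_in b)\<^sup>* \<Longrightarrow> x \<in> b \<Longrightarrow> y \<in> b"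
  by (induction rule: rtrancl_induct) (auto simp: mem_adj_in)

lemma compo_self: "x \<in> b \<Longrightarrow> x \<in> compo b x" by (simp add: compo_def)

lemma compo_eq: "x \<in> b \<Longrightarrow> y \<in> compo b x \<Longrightarrow> compo b y = compo b x"
proof -
  assume "y \<in> compo b x"
  then have xy: "(x, y) \<in> (adj_in b)\<^sup>*" by (simp add: compo_def)
  then have yx: "(y, x) \<in> (adj_in b)\<^sup>*" by (rule adj_in_rtrancl_sym)
  show ?thesis
    unfolding compo_def using rtrancl_trans[OF xy] rtrancl_trans[OF yx] by blast
qed

lemma compo_sub: "compo b x \<subseteq> b" by (auto simp: compo_def)

lemma finite_components: "finite b \<Longrightarrow> finite (components b)"
  by (simp add: components_compo)

lemma components_sub: "C \<in> components b \<Longrightarrow> C \<subseteq> b"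
  by (auto simp: components_compo compo_def)

lemma components_ne: "C \<in> components b \<Longrightarrow> C \<noteq> {}"
  by (auto simp: components_compo compo_def)

lemma rtrancl_img1:
  assumes "(x, y) \<in> R\<^sup>*" shows "(f x, f y) \<in> (map_prod f f ` R)\<^sup>*"
  using assms
proof (induction rule: rtrancl_induct)
  case base then show ?case by simp
next
  case (step y z)
  then have "(f y, f z) \<in> map_prod f f ` R" by force
  with step show ?case by (meson rtrancl.rtrancl_into_rtrancl)
qed

lemma rtrancl_img2:
  assumes "(u, v) \<in> (map_prod f f ` R)\<^sup>*" "inj f" "u = f x"
  shows "\<exists>y. v = f y \<and> (x, y) \<in> R\<^sup>*"
  using assms(1)
proof (induction rule: rtrancl_induct)
  case base then show ?case using assms by auto
next
  case (step y z)
  then obtain y' where y': "y = f y'" "(x, y') \<in> R\<^sup>*" by auto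
  from step(2) obtain a c where "(a, c) \<in> R" "y = f a" "z = f c" by auto
  with y' assms(2) have "(y', c) \<in> R" by (auto dest: injD)
  with y' \<open>z = f c\<close> show ?case using rtrancl.rtrancl_into_rtrancl[OF y'(2)] by blast
qed

lemma rtrancl_img:
  "inj f \<Longrightarrow> ((f x, f y) \<in> (map_prod f f ` R)\<^sup>*) = ((x, y) \<in> R\<^sup>*)"
  using rtrancl_img1[of x y R f] rtrancl_img2[of "f x" "f y" f R x]
  by (auto dest: injD)

lemma adj_in_img:
  assumes "inj f" "\<And>p q. adjb (f p) (f q) = adjb p q"
  shows "adj_in (f ` B) = map_prod f f ` adj_in B"
proof (rule set_eqI)
  fix z :: "(nat \<times> nat) \<times> (nat \<times> nat)"
  obtain u v where z: "z = (u, v)" by (cases z)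
  show "z \<in> adj_in (f ` B) \<longleftrightarrow> z \<in> map_prod f f ` adj_in B"
  proof
    assume "z \<in> adj_in (f ` B)"
    then obtain x y where "u = f x" "v = f y" "x \<in> B" "y \<in> B" "adjb (f x) (f y)"
      by (auto simp: z mem_adj_in)
    then show "z \<in> map_prod f f ` adj_in B" using assms(2)
      by (auto simp: z mem_adj_in intro!: image_eqI[where x="(x, y)"])
  next
    assume "z \<in> map_prod f f ` adj_in B"
    then show "z \<in> adj_in (f ` B)" using assms(2) by (auto simp: z mem_adj_in)
  qed
qed

lemma compo_img:
  assumes "inj f" "\<And>p q. adjb (f p) (f q) = adjb p q" "x \<in> B"
  shows "compo (f ` B) (f x) = f ` compo B x"
proof -
  show ?thesis
  proof (rule set_eqI, rule iffI)
    fix z assume "z \<in> compo (f ` B) (f x)"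
    then obtain y where y: "z = f y" "y \<in> B" "(f x, f y) \<in> (adj_in (f ` B))\<^sup>*"
      by (auto simp: compo_def)
    then have "(x, y) \<in> (adj_in B)\<^sup>*" using rtrancl_img[OF assms(1)] adj_in_img[OF assms(1,2)] by simp
    with y show "z \<in> f ` compo B x" by (auto simp: compo_def)
  next
    fix z assume "z \<in> f ` compo B x"
    then obtain y where y: "z = f y" "y \<in> B" "(x, y) \<in> (adj_in B)\<^sup>*"
      by (auto simp: compo_def)
    then have "(f x, f y) \<in> (adj_in (f ` B))\<^sup>*" using rtrancl_img[OF assms(1)] adj_in_img[OF assms(1,2)] by simp
    with y show "z \<in> compo (f ` B) (f x)" by (auto simp: compo_def)
  qed
qed

lemma components_img:
  assumes "inj f" "\<And>p q. adjb (f p) (f q) = adjb p q"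
  shows "components (f ` B) = (\<lambda>C. f ` C) ` components B"
  unfolding components_compo using compo_img[OF assms]
  by (auto simp: image_image) 


lemma adj_in_mono: "B \<subseteq> B' \<Longrightarrow> (x, y) \<in> (adj_in B)\<^sup>* \<Longrightarrow> (x, y) \<in> (adj_in B')\<^sup>*"
proof -
  assume "B \<subseteq> B'"
  then have "adj_in B \<subseteq> adj_in B'" by (auto simp: mem_adj_in)
  then show "(x, y) \<in> (adj_in B)\<^sup>* \<Longrightarrow> (x, y) \<in> (adj_in B')\<^sup>*" using rtrancl_mono by blast
qed

locale ins_one =
  fixes p q0 :: "nat \<times> nat" and B :: "(nat \<times> nat) set"
  assumes pB: "p \<notin> B" and q0B: "q0 \<in> B" and pq0: "adjb p q0"
    and uniq: "\<And>q. q \<in> B \<Longrightarrow> adjb p q \<Longrightarrow> q = q0"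
begin

lemma reach:
  assumes "(x, z) \<in> (adj_in (insert p B))\<^sup>*" "x \<in> B"
  shows "(z \<in> B \<and> (x, z) \<in> (adj_in B)\<^sup>*) \<or> (z = p \<and> (x, q0) \<in> (adj_in B)\<^sup>*)"
  using assms(1)
proof (induction rule: rtrancl_induct)
  case base then show ?case using assms(2) by simp
next
  case (step y z)
  from step(2) have yz: "y \<in> insert p B" "z \<in> insert p B" "adjb y z" by (auto simp: mem_adj_in)
  from step(3) show ?case
  proof
    assume h: "y \<in> B \<and> (x, y) \<in> (adj_in B)\<^sup>*"
    show ?thesis
    proof (cases "z = p")
      case True
      then have "y = q0" using uniq h yz adjb_sym by blast
      with h True show ?thesis by simp
    next
      case False
      then have yzB: "(y, z) \<in> adj_in B" using h yz by (auto simp: mem_adj_in)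
      have "(x, z) \<in> (adj_in B)\<^sup>*" using rtrancl.rtrancl_into_rtrancl[OF conjunct2[OF h] yzB] .
      then show ?thesis using yzB by (simp add: mem_adj_in)
    qed
  next
    assume h: "y = p \<and> (x, q0) \<in> (adj_in B)\<^sup>*"
    then have "z \<noteq> p" using yz by auto
    then have "z = q0" using h yz uniq[of z] by blast
    with h show ?thesis using q0B by simp
  qed
qed

lemma reach_p:
  assumes "(p, z) \<in> (adj_in (insert p B))\<^sup>*"
  shows "z = p \<or> (z \<in> B \<and> (q0, z) \<in> (adj_in B)\<^sup>*)"
  using assms
proof (cases rule: converse_rtranclE)
  case base then show ?thesis by simp
next
  case (step y)
  then have "y \<in> insert p B" "adjb p y" by (auto simp: mem_adj_in)
  then have "y = q0" using uniq[of y] adjb_irrefl[of p] by blast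
  with step(2) have "(q0, z) \<in> (adj_in (insert p B))\<^sup>*" by simp
  from reach[OF this q0B] show ?thesis by auto
qed

lemma p_q0: "(p, q0) \<in> adj_in (insert p B)" "(q0, p) \<in> adj_in (insert p B)"
  using pq0 q0B adjb_sym by (auto simp: mem_adj_in)

lemma compo_x:
  assumes "x \<in> B"
  shows "compo (insert p B) x = (if q0 \<in> compo B x then insert p (compo B x) else compo B x)"
proof -
  have mono: "(u, v) \<in> (adj_in B)\<^sup>* \<Longrightarrow> (u, v) \<in> (adj_in (insert p B))\<^sup>*" for u v
    by (rule adj_in_mono[of B]) auto
  show ?thesis
  proof (cases "q0 \<in> compo B x")
    case True
    then have "(x, q0) \<in> (adj_in B)\<^sup>*" by (simp add: compo_def)
    then have xp: "(x, p) \<in> (adj_in (insert p B))\<^sup>*" using rtrancl.rtrancl_into_rtrancl[OF mono p_q0(2)] by blast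
    have "compo (insert p B) x = insert p (compo B x)"
    proof (rule set_eqI)
      fix z
      show "z \<in> compo (insert p B) x \<longleftrightarrow> z \<in> insert p (compo B x)"
      proof
        assume "z \<in> compo (insert p B) x"
        then have "(x, z) \<in> (adj_in (insert p B))\<^sup>*" by (simp add: compo_def)
        from reach[OF this assms] show "z \<in> insert p (compo B x)" by (auto simp: compo_def)
      next
        assume "z \<in> insert p (compo B x)"
        then show "z \<in> compo (insert p B) x" using xp mono[of x z] by (auto simp: compo_def)
      qed
    qed
    then show ?thesis using True by simp
  next
    case False
    have "compo (insert p B) x = compo B x"
    proof (rule set_eqI)
      fix z
      show "z \<in> compo (insert p B) x \<longleftrightarrow> z \<in> compo B x"
      proof
        assume "z \<in> compo (insert p B) x"
        then have "(x, z) \<in> (adj_in (insert p B))\<^sup>*" by (simp add: compo_def)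
        from reach[OF this assms] False assms q0B show "z \<in> compo B x" by (auto simp: compo_def)
      next
        assume "z \<in> compo B x"
        then show "z \<in> compo (insert p B) x" using mono[of x z] by (auto simp: compo_def)
      qed
    qed
    then show ?thesis using False by simp
  qed
qed

lemma compo_p: "compo (insert p B) p = insert p (compo B q0)"
proof -
  have mono: "(u, v) \<in> (adj_in B)\<^sup>* \<Longrightarrow> (u, v) \<in> (adj_in (insert p B))\<^sup>*" for u v
    by (rule adj_in_mono[of B]) auto
  have "(q0, z) \<in> (adj_in B)\<^sup>* \<Longrightarrow> (p, z) \<in> (adj_in (insert p B))\<^sup>*" for z
    using converse_rtrancl_into_rtrancl[OF p_q0(1) mono] by blast
  then show ?thesis using reach_p by (auto simp: compo_def)
qed

lemma components_ins:
  "components (insert p B) = insert (insert p (compo B q0)) (components B - {compo B q0})"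
proof -
  have eq: "q0 \<in> compo B x \<longleftrightarrow> compo B x = compo B q0" if "x \<in> B" for x
    using compo_eq[OF that, of q0] compo_self[OF q0B] by metis
  have "compo (insert p B) ` insert p B = insert (compo (insert p B) p) (compo (insert p B) ` B)"
    by simp
  also have "compo (insert p B) ` B = (\<lambda>x. if compo B x = compo B q0 then insert p (compo B q0) else compo B x) ` B"
    using compo_x eq by (intro image_cong) auto
  finally have 1: "components (insert p B) = insert (insert p (compo B q0))
      ((\<lambda>x. if compo B x = compo B q0 then insert p (compo B q0) else compo B x) ` B)"
    unfolding components_compo compo_p .
  show ?thesis
  proof (rule set_eqI)
    fix C
    show "C \<in> components (insert p B) \<longleftrightarrow> C \<in> insert (insert p (compo B q0)) (components B - {compo B q0})"
      by (subst 1) (auto simp: components_compo image_iff)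
  qed
qed

end

lemma components_ins_iso:
  assumes pB: "p \<notin> B" and iso: "\<And>q. q \<in> B \<Longrightarrow> \<not> adjb p q"
  shows "components (insert p B) = insert {p} (components B)"
proof -
  have reach: "z \<in> B \<and> (x, z) \<in> (adj_in B)\<^sup>*" if "(x, z) \<in> (adj_in (insert p B))\<^sup>*" "x \<in> B" for x z
    using that(1)
  proof (induction rule: rtrancl_induct)
    case base then show ?case using that(2) by simp
  next
    case (step y z)
    then have "z \<in> insert p B" "adjb y z" by (auto simp: mem_adj_in)
    moreover have "z \<noteq> p"
    proof
      assume "z = p"
      then have "adjb p y" using calculation adjb_sym by simp
      then show False using iso[of y] step by blast
    qed
    ultimately have "(y, z) \<in> adj_in B" using step by (auto simp: mem_adj_in)
    then show ?case using step rtrancl.rtrancl_into_rtrancl[of x y "adj_in B" z] by (auto simp: mem_adj_in)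
  qed
  have reach_p: "z = p" if "(p, z) \<in> (adj_in (insert p B))\<^sup>*" for z
    using that
  proof (cases rule: converse_rtranclE)
    case (step y)
    then have "y \<in> insert p B" "adjb p y" by (auto simp: mem_adj_in)
    then show ?thesis using iso[of y] adjb_irrefl[of p] by blast
  qed simp
  have mono: "(adj_in B)\<^sup>* \<subseteq> (adj_in (insert p B))\<^sup>*"
    using adj_in_mono[of B "insert p B"] by auto
  have cx: "compo (insert p B) x = compo B x" if "x \<in> B" for x
  proof (rule set_eqI)
    fix z
    show "z \<in> compo (insert p B) x \<longleftrightarrow> z \<in> compo B x"
    proof
      assume "z \<in> compo (insert p B) x"
      then show "z \<in> compo B x" using reach[OF _ that, of z] by (simp add: compo_def)
    next
      assume "z \<in> compo B x"
      then show "z \<in> compo (insert p B) x" using subsetD[OF mono, of "(x, z)"] by (simp add: compo_def)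
    qed
  qed
  have cp: "compo (insert p B) p = {p}"
    using reach_p by (auto simp: compo_def)
  show ?thesis unfolding components_compo using cx cp by auto
qed


definition sf :: "nat \<times> nat \<Rightarrow> nat \<times> nat" where "sf = (\<lambda>(i, j). (i, Suc j))"
definition shb :: "(nat \<times> nat) set \<Rightarrow> (nat \<times> nat) set" where "shb B = sf ` B"

lemma sf_simp[simp]: "sf (i, j) = (i, Suc j)" by (simp add: sf_def)
lemma inj_sf: "inj sf" by (auto simp: inj_def sf_def)
lemma adjb_sf: "adjb (sf p) (sf q) = adjb p q" by (cases p; cases q) (auto simp: adjb_def)

lemma mem_shb: "(i, j) \<in> shb B \<longleftrightarrow> (\<exists>j'. j = Suc j' \<and> (i, j') \<in> B)"
  unfolding shb_def by (auto simp: image_iff sf_def) (metis sf_def sf_simp)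

definition gw :: "(nat \<Rightarrow> mpoly) \<Rightarrow> (nat \<times> nat) set \<Rightarrow> mpoly" where
  "gw w h = w 2 ^ (nrows h - 1) * w 4 ^ (ncols h - 1)"

lemma Omega_gen_alt: "Omega_gen w l n b = w 1 ^ cbar l n b * w 3 ^ rbar l b *
   (w 5 * w 6) ^ card (components b) * prod (gw w) (components b)"
  by (simp add: Omega_gen_def gw_def)

lemma components_shb: "components (shb B) = (\<lambda>C. sf ` C) ` components B"
  unfolding shb_def by (rule components_img[OF inj_sf adjb_sf])

lemma inj_on_img_sf: "inj_on (\<lambda>C. sf ` C) X"
  by (meson inj_image_eq_iff inj_onI inj_sf)

lemma gw_sf: "gw w (sf ` h) = gw w h"
proof -
  have "fst ` sf ` h = fst ` h" by (force simp: image_iff sf_def)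
  moreover have "snd ` sf ` h = Suc ` snd ` h" by (force simp: image_iff sf_def)
  ultimately show ?thesis by (simp add: gw_def nrows_def ncols_def card_image)
qed

lemma card_components_shb: "card (components (shb B)) = card (components B)"
  unfolding components_shb by (rule card_image[OF inj_on_img_sf])

lemma prod_components_shb: "prod (gw w) (components (shb B)) = prod (gw w) (components B)"
  unfolding components_shb by (simp add: prod.reindex[OF inj_on_img_sf] gw_sf comp_def)

lemma rbar_shb: "rbar l (shb S) = rbar l S"
  unfolding rbar_def by (simp add: mem_shb) 

lemma cbar_shb:
  assumes "\<forall>q\<in>S. 1 \<le> snd q" "l \<le> n"
  shows "cbar l (Suc n) (shb S) = Suc (cbar l n S)"
proof -
  have "{j \<in> {1..Suc n - l}. \<forall>i. (i, j) \<notin> shb S} = insert 1 (Suc ` {j \<in> {1..n - l}. \<forall>i. (i, j) \<notin> S})"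
    (is "?A = ?B")
  proof (rule set_eqI)
    fix j show "j \<in> ?A \<longleftrightarrow> j \<in> ?B"
      using assms by (cases j) (auto simp: mem_shb Suc_diff_le)
  qed
  moreover have "finite {j \<in> {1..n - l}. \<forall>i. (i, j) \<notin> S}" by simp
  moreover have "1 \<notin> Suc ` {j \<in> {1..n - l}. \<forall>i. (i, j) \<notin> S}" by auto
  moreover have "card (Suc ` {j \<in> {1..n - l}. \<forall>i. (i, j) \<notin> S}) = card {j \<in> {1..n - l}. \<forall>i. (i, j) \<notin> S}"
    by (rule card_image) simp
  ultimately show ?thesis unfolding cbar_def by simp
qed

lemma Om1:
  assumes "finite S" "\<forall>q\<in>S. 1 \<le> snd q" "l \<le> n"
  shows "Omega_gen w l (Suc n) (shb S) = w 1 * Omega_gen w l n S"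
  unfolding Omega_gen_alt using assms
  by (simp add: cbar_shb rbar_shb card_components_shb prod_components_shb)

lemma Om2:
  assumes "\<forall>q\<in>S. fst q \<le> l"
  shows "Omega_gen w (Suc l) (Suc n) S = w 3 * Omega_gen w l n S"
proof -
  have "{i \<in> {1..Suc l}. \<forall>j. (i, j) \<notin> S} = insert (Suc l) {i \<in> {1..l}. \<forall>j. (i, j) \<notin> S}"
    using assms by (force simp: le_Suc_eq)
  then have "rbar (Suc l) S = Suc (rbar l S)" unfolding rbar_def by simp
  moreover have "cbar (Suc l) (Suc n) S = cbar l n S" by (simp add: cbar_def)
  ultimately show ?thesis unfolding Omega_gen_alt by simp
qed

lemma p_notin_components: "p \<notin> B \<Longrightarrow> C \<in> components B \<Longrightarrow> p \<notin> C"
  using components_sub by blast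

context ins_one begin

lemma C0_in: "compo B q0 \<in> components B"
  using q0B by (simp add: components_compo)

lemma insC0_notin: "insert p (compo B q0) \<notin> components B - {compo B q0}"
  using p_notin_components[OF pB] by blast

lemma card_comps:
  assumes "finite B" shows "card (components (insert p B)) = card (components B)"
proof -
  have fin: "finite (components B)" using assms by (rule finite_components)
  have "card (components (insert p B)) = Suc (card (components B - {compo B q0}))"
    unfolding components_ins using insC0_notin fin by simp
  also have "\<dots> = card (components B)"
    using fin C0_in card_Diff_singleton card_gt_0_iff by (metis Suc_pred' empty_iff)
  finally show ?thesis .
qed

lemma prod_comps:
  assumes "finite B" and fc: "f (insert p (compo B q0)) = c * f (compo B q0)"
  shows "prod f (components (insert p B)) = c * prod f (components B)"
proof -
  have fin: "finite (components B)" using assms(1) by (rule finite_components)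
  have "prod f (components (insert p B)) = f (insert p (compo B q0)) * prod f (components B - {compo B q0})"
    unfolding components_ins using insC0_notin fin by simp
  moreover have "prod f (components B) = f (compo B q0) * prod f (components B - {compo B q0})"
    using prod.remove[OF fin C0_in] .
  ultimately show ?thesis using fc by (simp add: ac_simps)
qed

end

lemma iso_card_prod:
  assumes "p \<notin> B" "\<And>q. q \<in> B \<Longrightarrow> \<not> adjb p q" "finite B"
  shows "card (components (insert p B)) = Suc (card (components B))"
    "prod f (components (insert p B)) = f {p} * prod f (components B)"
proof -
  have "{p} \<notin> components B" using p_notin_components[OF assms(1)] by blast
  moreover have "finite (components B)" using assms(3) by (rule finite_components)
  ultimately show "card (components (insert p B)) = Suc (card (components B))"
    "prod f (components (insert p B)) = f {p} * prod f (components B)"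
    by (simp_all add: components_ins_iso[OF assms(1,2)])
qed

lemma finite_shb: "finite S \<Longrightarrow> finite (shb S)" by (simp add: shb_def)

lemma Om3:
  assumes fin: "finite S" and L1: "(L, 1) \<in> S" and bnd: "\<forall>q\<in>S. 1 \<le> snd q \<and> fst q \<le> L" and Ln: "L \<le> n"
  shows "Omega_gen w L (Suc n) (insert (L, 1) (shb S)) = w 4 * Omega_gen w L n S"
proof -
  let ?X = "shb S"
  interpret I: ins_one "(L, 1)" "(L, 2)" ?X
  proof
    show "(L, 1) \<notin> ?X" using bnd by (force simp: mem_shb)
    show "(L, 2) \<in> ?X" using L1 by (simp add: mem_shb numeral_2_eq_2)
    show "adjb (L, 1) (L, 2)" by (simp add: adjb_def)
    fix q assume "q \<in> ?X" "adjb (L, 1) q"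
    then show "q = (L, 2)" using bnd by (cases q) (auto simp: adjb_def mem_shb)
  qed
  let ?C0 = "compo ?X (L, 2)"
  have finX: "finite ?X" using fin by (rule finite_shb)
  have C0sub: "?C0 \<subseteq> ?X" by (rule compo_sub)
  have finC0: "finite ?C0" using finX C0sub finite_subset by blast
  have q0C0: "(L, 2) \<in> ?C0" using I.q0B by (rule compo_self)
  have rows: "fst ` insert (L, 1) ?C0 = fst ` ?C0" using q0C0 by force
  have cols: "snd ` insert (L, 1) ?C0 = insert 1 (snd ` ?C0)" by simp
  have n1: "1 \<notin> snd ` ?C0"
  proof
    assume "1 \<in> snd ` ?C0"
    then obtain i where "(i, 1) \<in> ?C0" by force
    then have "(i, 1) \<in> ?X" using C0sub by blast
    then show False using bnd by (force simp: mem_shb)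
  qed
  have cpos: "card (snd ` ?C0) \<ge> 1" using q0C0 finC0
    by (metis One_nat_def Suc_leI card_gt_0_iff empty_iff finite_imageI imageI)
  have g: "gw w (insert (L, 1) ?C0) = w 4 * gw w ?C0"
  proof -
    obtain d where d: "card (snd ` ?C0) = Suc d" using cpos not0_implies_Suc by force
    have "card (snd ` insert (L, 1) ?C0) = Suc (Suc d)" unfolding cols using n1 finC0 d by simp
    then show ?thesis unfolding gw_def nrows_def ncols_def rows using d by (simp add: ac_simps)
  qed
  have card: "card (components (insert (L, 1) ?X)) = card (components S)"
    using I.card_comps[OF finX] card_components_shb by simp
  have prod: "prod (gw w) (components (insert (L, 1) ?X)) = w 4 * prod (gw w) (components S)"
    using I.prod_comps[OF finX g] prod_components_shb by simp
  have cb: "cbar L (Suc n) (insert (L, 1) ?X) = cbar L n S"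
  proof -
    have "{j \<in> {1..Suc n - L}. \<forall>i. (i, j) \<notin> insert (L, 1) ?X} = Suc ` {j \<in> {1..n - L}. \<forall>i. (i, j) \<notin> S}"
      (is "?A = ?B")
    proof (rule set_eqI)
      fix j show "j \<in> ?A \<longleftrightarrow> j \<in> ?B"
        using Ln bnd by (cases j) (auto simp: mem_shb Suc_diff_le image_iff; metis not_gr0)+
    qed
    then show ?thesis unfolding cbar_def by (simp add: card_image)
  qed
  have rb: "rbar L (insert (L, 1) ?X) = rbar L S"
  proof -
    have "{i \<in> {1..L}. \<forall>j. (i, j) \<notin> insert (L, 1) ?X} = {i \<in> {1..L}. \<forall>j. (i, j) \<notin> S}"
      using L1 by (auto simp: mem_shb)
    then show ?thesis unfolding rbar_def by simp
  qed
  show ?thesis unfolding Omega_gen_alt cb rb card prod by (simp add: ac_simps)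
qed


lemma Om4:
  assumes fin: "finite S" and L1: "(L, 1) \<in> S" and bnd: "\<forall>q\<in>S. 1 \<le> snd q \<and> fst q \<le> L"
  shows "Omega_gen w (Suc L) (Suc n) (insert (Suc L, 1) S) = w 2 * Omega_gen w L n S"
proof -
  interpret I: ins_one "(Suc L, 1)" "(L, 1)" S
  proof
    show "(Suc L, 1) \<notin> S" using bnd by force
    show "(L, 1) \<in> S" by (rule L1)
    show "adjb (Suc L, 1) (L, 1)" by (simp add: adjb_def)
    fix q assume "q \<in> S" "adjb (Suc L, 1) q"
    then show "q = (L, 1)" using bnd by (cases q) (force simp: adjb_def)
  qed
  let ?C0 = "compo S (L, 1)"
  have C0sub: "?C0 \<subseteq> S" by (rule compo_sub)
  have finC0: "finite ?C0" using fin C0sub finite_subset by blast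
  have q0C0: "(L, 1) \<in> ?C0" using I.q0B by (rule compo_self)
  have cols: "snd ` insert (Suc L, 1) ?C0 = snd ` ?C0" using q0C0 by force
  have rows: "fst ` insert (Suc L, 1) ?C0 = insert (Suc L) (fst ` ?C0)" by simp
  have n1: "Suc L \<notin> fst ` ?C0" using C0sub bnd by force
  have cpos: "card (fst ` ?C0) \<ge> 1" using q0C0 finC0
    by (metis One_nat_def Suc_leI card_gt_0_iff empty_iff finite_imageI imageI)
  have g: "gw w (insert (Suc L, 1) ?C0) = w 2 * gw w ?C0"
  proof -
    obtain d where d: "card (fst ` ?C0) = Suc d" using cpos not0_implies_Suc by force
    have "card (fst ` insert (Suc L, 1) ?C0) = Suc (Suc d)" unfolding rows using n1 finC0 d by simp
    then show ?thesis unfolding gw_def nrows_def ncols_def cols using d by (simp add: ac_simps)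
  qed
  have card: "card (components (insert (Suc L, 1) S)) = card (components S)"
    using I.card_comps[OF fin] by simp
  have prod: "prod (gw w) (components (insert (Suc L, 1) S)) = w 2 * prod (gw w) (components S)"
    using I.prod_comps[OF fin g] by simp
  have cb: "cbar (Suc L) (Suc n) (insert (Suc L, 1) S) = cbar L n S"
  proof -
    have "{j \<in> {1..Suc n - Suc L}. \<forall>i. (i, j) \<notin> insert (Suc L, 1) S} = {j \<in> {1..n - L}. \<forall>i. (i, j) \<notin> S}"
      using L1 by auto
    then show ?thesis unfolding cbar_def by simp
  qed
  have rb: "rbar (Suc L) (insert (Suc L, 1) S) = rbar L S"
  proof -
    have "{i \<in> {1..Suc L}. \<forall>j. (i, j) \<notin> insert (Suc L, 1) S} = {i \<in> {1..L}. \<forall>j. (i, j) \<notin> S}"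
      using bnd by (auto simp: le_Suc_eq)
    then show ?thesis unfolding rbar_def by simp
  qed
  show ?thesis unfolding Omega_gen_alt cb rb card prod by (simp add: ac_simps)
qed

lemma Om5:
  assumes fin: "finite S" and bnd: "\<forall>q\<in>S. 1 \<le> snd q \<and> fst q \<le> L" and Ln: "L \<le> n"
  shows "Omega_gen w (Suc L) (Suc (Suc n)) (insert (Suc L, 1) (shb S)) = w 5 * w 6 * Omega_gen w L n S"
proof -
  let ?X = "shb S"
  have pX: "(Suc L, 1) \<notin> ?X" using bnd by (force simp: mem_shb)
  have iso: "\<not> adjb (Suc L, 1) q" if "q \<in> ?X" for q
    using that bnd by (cases q) (force simp: adjb_def mem_shb)
  have finX: "finite ?X" using fin by (rule finite_shb)
  have card: "card (components (insert (Suc L, 1) ?X)) = Suc (card (components S))"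
    using iso_card_prod(1)[OF pX iso finX] card_components_shb by simp
  have prod: "prod (gw w) (components (insert (Suc L, 1) ?X)) = prod (gw w) (components S)"
    using iso_card_prod(2)[OF pX iso finX, of "gw w"] prod_components_shb by (simp add: gw_def nrows_def ncols_def)
  have cb: "cbar (Suc L) (Suc (Suc n)) (insert (Suc L, 1) ?X) = cbar L n S"
  proof -
    have "{j \<in> {1..Suc (Suc n) - Suc L}. \<forall>i. (i, j) \<notin> insert (Suc L, 1) ?X} = Suc ` {j \<in> {1..n - L}. \<forall>i. (i, j) \<notin> S}"
      (is "?A = ?B")
    proof (rule set_eqI)
      fix j show "j \<in> ?A \<longleftrightarrow> j \<in> ?B"
        using Ln bnd by (cases j) (auto simp: mem_shb Suc_diff_le image_iff; metis not_gr0)+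
    qed
    then show ?thesis unfolding cbar_def by (simp add: card_image)
  qed
  have rb: "rbar (Suc L) (insert (Suc L, 1) ?X) = rbar L S"
  proof -
    have "{i \<in> {1..Suc L}. \<forall>j. (i, j) \<notin> insert (Suc L, 1) ?X} = {i \<in> {1..L}. \<forall>j. (i, j) \<notin> S}"
      using bnd by (auto simp: le_Suc_eq mem_shb)
    then show ?thesis unfolding rbar_def by simp
  qed
  show ?thesis unfolding Omega_gen_alt cb rb card prod by (simp add: ac_simps)
qed


definition supp :: "nat \<Rightarrow> (nat \<Rightarrow> nat) \<Rightarrow> bool" where
  "supp l f \<longleftrightarrow> (\<forall>j. (j = 0 \<or> l < j) \<longrightarrow> f j = 0)"

lemma supp_label: "supp (cnt s) (label s)"
  unfolding supp_def by (intro allI impI label_supp)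

lemma suppD: "supp l f \<Longrightarrow> j = 0 \<or> l < j \<Longrightarrow> f j = 0" unfolding supp_def by (erule allE) (erule mp)

lemma supp_sh: "supp l (sh l f)" by (simp add: supp_def sh_def)

lemma mem_skew: "(i, j) \<in> skew la mu \<longleftrightarrow> 1 \<le> i \<and> 1 \<le> j \<and> mu i < j \<and> j \<le> la i"
  by (auto simp: skew_def diagram_def)

lemma skew_bnd: "supp l la \<Longrightarrow> q \<in> skew la mu \<Longrightarrow> 1 \<le> snd q \<and> fst q \<le> l \<and> 1 \<le> fst q"
proof -
  assume s: "supp l la" and q: "q \<in> skew la mu"
  obtain i j where ij: "q = (i, j)" by (cases q)
  with q have h: "1 \<le> i" "1 \<le> j" "mu i < j" "j \<le> la i" by (auto simp: mem_skew)
  have "i \<le> l"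
  proof (rule ccontr)
    assume "\<not> i \<le> l"
    then have "la i = 0" using suppD[OF s, of i] by simp
    with h show False by simp
  qed
  with h ij show ?thesis by simp
qed

lemma finite_skew: "supp l la \<Longrightarrow> finite (skew la mu)"
proof -
  assume s: "supp l la"
  have "skew la mu \<subseteq> Sigma {1..l} (\<lambda>i. {1..la i})"
    using skew_bnd[OF s] by (force simp: mem_skew)
  then show ?thesis by (rule finite_subset) auto
qed

lemma SK1: "supp l la \<Longrightarrow> supp l mu \<Longrightarrow> skew (sh l la) (sh l mu) = shb (skew la mu)"
proof (rule set_eqI)
  fix q :: "nat \<times> nat"
  assume s: "supp l la" "supp l mu"
  obtain i j where q: "q = (i, j)" by (cases q)
  show "q \<in> skew (sh l la) (sh l mu) \<longleftrightarrow> q \<in> shb (skew la mu)"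
  proof (cases "1 \<le> i \<and> i \<le> l")
    case True
    then show ?thesis unfolding q by (cases j) (auto simp: mem_skew mem_shb sh_def)
  next
    case False
    then have "la i = 0" using suppD[OF s(1), of i] by auto
    then show ?thesis using False unfolding q by (auto simp: mem_skew mem_shb sh_def)
  qed
qed


lemma SK3:
  assumes sl: "supp L la" and sm: "supp (L - 1) mu" and L: "1 \<le> L"
  shows "skew (sh L (sh L la)) (sh (L - 1) mu) = insert (L, 1) (shb (skew (sh L la) mu))"
proof (rule set_eqI)
  fix q :: "nat \<times> nat"
  obtain i j where q: "q = (i, j)" by (cases q)
  have muL: "mu L = 0" using suppD[OF sm, of L] L by simp
  show "q \<in> skew (sh L (sh L la)) (sh (L - 1) mu) \<longleftrightarrow> q \<in> insert (L, 1) (shb (skew (sh L la) mu))"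
  proof (cases "1 \<le> i \<and> i < L")
    case True
    then show ?thesis unfolding q by (cases j) (auto simp: mem_skew mem_shb sh_def)
  next
    case False
    show ?thesis
    proof (cases "i = L")
      case True
      then show ?thesis unfolding q using L muL by (cases j) (auto simp: mem_skew mem_shb sh_def)
    next
      case False
      then show ?thesis using \<open>\<not> (1 \<le> i \<and> i < L)\<close> unfolding q by (auto simp: mem_skew mem_shb sh_def)
    qed
  qed
qed

lemma SK4:
  assumes sl: "supp L la" and sm: "supp L mu"
  shows "skew (sh (Suc L) la) mu = insert (Suc L, 1) (skew (sh L la) mu)"
proof (rule set_eqI)
  fix q :: "nat \<times> nat"
  obtain i j where q: "q = (i, j)" by (cases q)
  have m: "mu (Suc L) = 0" "la (Suc L) = 0" using suppD[OF sm, of "Suc L"] suppD[OF sl, of "Suc L"] by auto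
  show "q \<in> skew (sh (Suc L) la) mu \<longleftrightarrow> q \<in> insert (Suc L, 1) (skew (sh L la) mu)"
  proof (cases "1 \<le> i \<and> i \<le> L")
    case True
    then show ?thesis unfolding q by (auto simp: mem_skew sh_def)
  next
    case False
    show ?thesis
    proof (cases "i = Suc L")
      case True
      then show ?thesis unfolding q using m by (auto simp: mem_skew sh_def)
    next
      case False
      then show ?thesis using \<open>\<not> (1 \<le> i \<and> i \<le> L)\<close> unfolding q by (auto simp: mem_skew sh_def)
    qed
  qed
qed

lemma SK5:
  assumes sl: "supp L la" and sm: "supp L mu"
  shows "skew (sh (Suc L) la) (sh L mu) = insert (Suc L, 1) (shb (skew la mu))"
proof (rule set_eqI)
  fix q :: "nat \<times> nat"
  obtain i j where q: "q = (i, j)" by (cases q)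
  show "q \<in> skew (sh (Suc L) la) (sh L mu) \<longleftrightarrow> q \<in> insert (Suc L, 1) (shb (skew la mu))"
  proof (cases "1 \<le> i \<and> i \<le> L")
    case True
    then show ?thesis unfolding q by (cases j) (auto simp: mem_skew mem_shb sh_def)
  next
    case False
    then have "la i = 0" using suppD[OF sl, of i] by auto
    show ?thesis
    proof (cases "i = Suc L")
      case True
      then show ?thesis unfolding q using \<open>la i = 0\<close> by (cases j) (auto simp: mem_skew mem_shb sh_def)
    next
      case False
      then show ?thesis using \<open>\<not> (1 \<le> i \<and> i \<le> L)\<close> \<open>la i = 0\<close> unfolding q by (auto simp: mem_skew mem_shb sh_def)
    qed
  qed
qed

lemma C1:
  assumes sl: "supp l la" and sm: "supp l mu"
  shows "contained (sh l mu) (sh l la) \<longleftrightarrow> contained mu la"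
proof -
  have "sh l mu i \<le> sh l la i \<longleftrightarrow> mu i \<le> la i" for i
    using suppD[OF sl, of i] suppD[OF sm, of i] by (auto simp: sh_def)
  then show ?thesis by (simp add: contained_def)
qed

lemma C3:
  assumes sl: "supp L la" and sm: "supp (L - 1) mu" and L: "1 \<le> L"
  shows "contained (sh (L - 1) mu) (sh L (sh L la)) \<longleftrightarrow> contained mu (sh L la)"
proof -
  have "sh (L - 1) mu i \<le> sh L (sh L la) i \<longleftrightarrow> mu i \<le> sh L la i" for i
    using suppD[OF sl, of i] suppD[OF sm, of i] L by (auto simp: sh_def)
  then show ?thesis by (simp add: contained_def)
qed

lemma C4:
  assumes sl: "supp L la" and sm: "supp L mu"
  shows "contained mu (sh (Suc L) la) \<longleftrightarrow> contained mu (sh L la)"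
proof -
  have "mu i \<le> sh (Suc L) la i \<longleftrightarrow> mu i \<le> sh L la i" for i
    using suppD[OF sl, of i] suppD[OF sm, of i] by (auto simp: sh_def le_Suc_eq)
  then show ?thesis by (simp add: contained_def)
qed

lemma C5:
  assumes sl: "supp L la" and sm: "supp L mu"
  shows "contained (sh L mu) (sh (Suc L) la) \<longleftrightarrow> contained mu la"
proof -
  have "sh L mu i \<le> sh (Suc L) la i \<longleftrightarrow> mu i \<le> la i" for i
    using suppD[OF sl, of i] suppD[OF sm, of i] by (auto simp: sh_def le_Suc_eq)
  then show ?thesis by (simp add: contained_def)
qed


lemma B1: "broken_rim_hook (shb B) \<longleftrightarrow> broken_rim_hook B"
  unfolding broken_rim_hook_def mem_shb by auto

lemma Bins1:
  assumes "\<forall>q\<in>X. 2 \<le> snd q"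
  shows "broken_rim_hook (insert (a, 1) X) \<longleftrightarrow> broken_rim_hook X"
proof
  assume "broken_rim_hook (insert (a, 1) X)"
  then show "broken_rim_hook X" unfolding broken_rim_hook_def by blast
next
  assume h: "broken_rim_hook X"
  show "broken_rim_hook (insert (a, 1) X)"
    unfolding broken_rim_hook_def
  proof
    assume "\<exists>i j. (i, j) \<in> insert (a, 1) X \<and> (i + 1, j) \<in> insert (a, 1) X \<and> (i, j + 1) \<in> insert (a, 1) X \<and> (i + 1, j + 1) \<in> insert (a, 1) X"
    then obtain i j where b: "(i, j) \<in> insert (a, 1) X" "(i + 1, j) \<in> insert (a, 1) X" "(i, j + 1) \<in> insert (a, 1) X" "(i + 1, j + 1) \<in> insert (a, 1) X"
      by blast
    have ij: "(i, j) \<in> X"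
    proof (rule ccontr)
      assume "(i, j) \<notin> X"
      then have "(i, j) = (a, 1)" using b(1) by simp
      then have "(i + 1, 1) \<in> X" using b(2) by (auto simp del: One_nat_def)
      then show False using assms by force
    qed
    then have "j \<ge> 2" using assms by force
    then have "(i + 1, j) \<in> X" "(i, j + 1) \<in> X" "(i + 1, j + 1) \<in> X" using b by auto
    then show False using h ij unfolding broken_rim_hook_def by blast
  qed
qed

lemma Bins2:
  assumes "\<forall>q\<in>X. fst q < a \<and> 1 \<le> snd q"
  shows "broken_rim_hook (insert (a, 1) X) \<longleftrightarrow> broken_rim_hook X"
proof
  assume "broken_rim_hook (insert (a, 1) X)"
  then show "broken_rim_hook X" unfolding broken_rim_hook_def by blast
next
  assume h: "broken_rim_hook X"
  show "broken_rim_hook (insert (a, 1) X)"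
    unfolding broken_rim_hook_def
  proof
    assume "\<exists>i j. (i, j) \<in> insert (a, 1) X \<and> (i + 1, j) \<in> insert (a, 1) X \<and> (i, j + 1) \<in> insert (a, 1) X \<and> (i + 1, j + 1) \<in> insert (a, 1) X"
    then obtain i j where b: "(i, j) \<in> insert (a, 1) X" "(i + 1, j) \<in> insert (a, 1) X" "(i, j + 1) \<in> insert (a, 1) X" "(i + 1, j + 1) \<in> insert (a, 1) X"
      by blast
    have "j \<noteq> 0"
    proof
      assume "j = 0"
      then have "(i, 0) \<in> X" using b(1) by auto
      then show False using assms by force
    qed
    then have "(i + 1, j + 1) \<in> X" using b(4) by auto
    then have "i + 1 < a" using assms by force
    then have "(i, j) \<in> X" "(i + 1, j) \<in> X" "(i, j + 1) \<in> X" using b by auto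
    then show False using h \<open>(i + 1, j + 1) \<in> X\<close> unfolding broken_rim_hook_def by blast
  qed
qed

lemma Z1lab:
  assumes "supp (L - 1) la" "1 \<le> L"
  shows "\<not> contained (sh L mu) la"
proof
  assume "contained (sh L mu) la"
  then have "sh L mu L \<le> la L" by (simp add: contained_def)
  moreover have "la L = 0" using suppD[OF assms(1), of L] assms(2) by simp
  ultimately show False using assms(2) by (simp add: sh_def)
qed

lemma Z2lab:
  assumes "supp (L - 2) mu" "2 \<le> L"
  shows "\<not> broken_rim_hook (skew (sh L (sh L la)) mu)"
proof -
  have m: "mu (L - 1) = 0" "mu L = 0" using suppD[OF assms(1), of "L - 1"] suppD[OF assms(1), of L] assms(2) by auto
  let ?i = "L - 1"
  have "?i + 1 = L" using assms(2) by simp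
  then show ?thesis unfolding broken_rim_hook_def using m assms(2)
    by (intro notI, elim notE) (rule exI[of _ ?i], rule exI[of _ 1], auto simp: mem_skew sh_def)
qed


definition Fw :: "(nat \<Rightarrow> mpoly) \<Rightarrow> nat list \<Rightarrow> nat list \<Rightarrow> mpoly" where
  "Fw w t s = (if cnt t = cnt s \<and> contained (label s) (label t) \<and> broken_rim_hook (skew (label t) (label s))
     then Omega_gen w (cnt t) (length t) (skew (label t) (label s)) else 0)"

definition cardsk :: "nat list \<Rightarrow> nat list \<Rightarrow> nat" where
  "cardsk t s = card (skew (label t) (label s))"

lemma label_Suc0[simp]: "label (Suc 0 # s) = label s" using label_Cons1 by simp
lemma cnt_Suc0[simp]: "cnt (Suc 0 # s) = Suc (cnt s)" using cnt_Cons1 by simp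

lemma supp_mono: "supp l f \<Longrightarrow> l \<le> l' \<Longrightarrow> supp l' f"
  unfolding supp_def by auto

lemma shb_bnd: "\<forall>q\<in>S. 1 \<le> snd q \<Longrightarrow> \<forall>q\<in>shb S. 2 \<le> snd q"
  by (auto simp: shb_def sf_def)

lemma F1: "Fw w (0 # t) (0 # s) = w 1 * Fw w t s"
proof (cases "cnt t = cnt s")
  case True
  let ?l = "cnt t"
  have sl: "supp ?l (label t)" and sm: "supp ?l (label s)" using supp_label True by metis+
  let ?S = "skew (label t) (label s)"
  have fin: "finite ?S" using finite_skew[OF sl] .
  have bnd: "\<forall>q\<in>?S. 1 \<le> snd q" using skew_bnd[OF sl] by blast
  have Om: "Omega_gen w ?l (Suc (length t)) (shb ?S) = w 1 * Omega_gen w ?l (length t) ?S"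
    by (rule Om1[OF fin bnd cnt_le])
  have cs: "cnt s = cnt t" using True by simp
  show ?thesis
    by (simp add: Fw_def cs SK1[OF sl sm] C1[OF sl sm] B1 Om)
next
  case False
  then show ?thesis by (simp add: Fw_def)
qed

lemma F2: "Fw w (1 # t) (1 # s) = w 3 * Fw w t s"
proof (cases "cnt t = cnt s")
  case True
  let ?l = "cnt t"
  have sl: "supp ?l (label t)" using supp_label by metis
  let ?S = "skew (label t) (label s)"
  have bnd: "\<forall>q\<in>?S. fst q \<le> ?l" using skew_bnd[OF sl] by blast
  have cs: "cnt s = cnt t" using True by simp
  show ?thesis
    by (simp add: Fw_def cs Om2[OF bnd])
next
  case False
  then show ?thesis by (simp add: Fw_def)
qed

lemma F3: "Fw w (0 # 0 # t) (1 # 0 # s) = w 4 * Fw w (0 # t) (1 # s)"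
proof (cases "cnt t = Suc (cnt s)")
  case True
  define M where "M = cnt s"
  define L where "L = Suc M"
  have ct': "cnt t = L" using True L_def M_def by simp
  have L1: "1 \<le> L" using L_def by simp
  have sl: "supp L (label t)" using supp_label ct' by metis
  have sm: "supp (L - 1) (label s)" using supp_label L_def M_def by simp
  have sm': "supp L (label s)" using supp_mono[OF sm] by simp
  let ?S = "skew (sh L (label t)) (label s)"
  have sl2: "supp L (sh L (label t))" by (rule supp_sh)
  have fin: "finite ?S" using finite_skew[OF sl2] .
  have bnd: "\<forall>q\<in>?S. 1 \<le> snd q \<and> fst q \<le> L" using skew_bnd[OF sl2] by blast
  have muL: "label s L = 0" using suppD[OF sm, of L] L1 by simp
  have L1S: "(L, 1) \<in> ?S" using L1 muL by (simp add: mem_skew sh_def)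
  have Ln: "L \<le> Suc (length t)" using cnt_le[of t] ct' by simp
  have Om: "Omega_gen w L (Suc (Suc (length t))) (insert (L, 1) (shb ?S)) = w 4 * Omega_gen w L (Suc (length t)) ?S"
    by (rule Om3[OF fin L1S bnd Ln])
  have sk: "skew (sh L (sh L (label t))) (sh M (label s)) = insert (L, 1) (shb ?S)"
    using SK3[OF sl sm L1] L_def by simp
  have ct: "contained (sh M (label s)) (sh L (sh L (label t))) = contained (label s) (sh L (label t))"
    using C3[OF sl sm L1] L_def by simp
  have br: "broken_rim_hook (insert (L, 1) (shb ?S)) = broken_rim_hook ?S"
    using Bins1[OF shb_bnd] bnd B1 by (metis (no_types, lifting))
  show ?thesis
    by (simp add: Fw_def ct' M_def[symmetric] L_def[symmetric] sk ct br[simplified] Om[simplified])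
next
  case False
  then show ?thesis by (simp add: Fw_def)
qed


lemma F4: "Fw w (0 # 1 # t) (1 # 1 # s) = w 2 * Fw w (0 # t) (1 # s)"
proof (cases "cnt t = Suc (cnt s)")
  case True
  define M where "M = cnt s"
  define L where "L = Suc M"
  have ct': "cnt t = L" using True L_def M_def by simp
  have L1: "1 \<le> L" using L_def by simp
  have sl: "supp L (label t)" using supp_label ct' by metis
  have sm: "supp (L - 1) (label s)" using supp_label L_def M_def by simp
  have sm': "supp L (label s)" using supp_mono[OF sm] by simp
  let ?S = "skew (sh L (label t)) (label s)"
  have sl2: "supp L (sh L (label t))" by (rule supp_sh)
  have fin: "finite ?S" using finite_skew[OF sl2] .
  have bnd: "\<forall>q\<in>?S. 1 \<le> snd q \<and> fst q \<le> L" using skew_bnd[OF sl2] by blast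
  have muL: "label s L = 0" using suppD[OF sm, of L] L1 by simp
  have L1S: "(L, 1) \<in> ?S" using L1 muL by (simp add: mem_skew sh_def)
  have Om: "Omega_gen w (Suc L) (Suc (Suc (length t))) (insert (Suc L, 1) ?S) = w 2 * Omega_gen w L (Suc (length t)) ?S"
    by (rule Om4[OF fin L1S bnd])
  have sk: "skew (sh (Suc L) (label t)) (label s) = insert (Suc L, 1) ?S"
    by (rule SK4[OF sl sm'])
  have ct: "contained (label s) (sh (Suc L) (label t)) = contained (label s) (sh L (label t))"
    by (rule C4[OF sl sm'])
  have bnd2: "\<forall>q\<in>?S. fst q < Suc L \<and> 1 \<le> snd q" using bnd by auto
  have br: "broken_rim_hook (insert (Suc L, 1) ?S) = broken_rim_hook ?S"
    by (rule Bins2[OF bnd2])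
  show ?thesis
    by (simp add: Fw_def ct' M_def[symmetric] L_def[symmetric] sk ct br[simplified] Om[simplified])
next
  case False
  then show ?thesis by (simp add: Fw_def)
qed

lemma F5: "Fw w (0 # 1 # t) (1 # 0 # s) = w 5 * w 6 * Fw w t s"
proof (cases "cnt t = cnt s")
  case True
  define L where "L = cnt t"
  have cs: "cnt s = L" using True L_def by simp
  have sl: "supp L (label t)" and sm: "supp L (label s)" using supp_label L_def cs by metis+
  let ?S = "skew (label t) (label s)"
  have fin: "finite ?S" using finite_skew[OF sl] .
  have bnd: "\<forall>q\<in>?S. 1 \<le> snd q \<and> fst q \<le> L" using skew_bnd[OF sl] by blast
  have Ln: "L \<le> length t" using cnt_le[of t] L_def by simp
  have Om: "Omega_gen w (Suc L) (Suc (Suc (length t))) (insert (Suc L, 1) (shb ?S)) = w 5 * w 6 * Omega_gen w L (length t) ?S"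
    by (rule Om5[OF fin bnd Ln])
  have sk: "skew (sh (Suc L) (label t)) (sh L (label s)) = insert (Suc L, 1) (shb ?S)"
    by (rule SK5[OF sl sm])
  have ct: "contained (sh L (label s)) (sh (Suc L) (label t)) = contained (label s) (label t)"
    by (rule C5[OF sl sm])
  have br: "broken_rim_hook (insert (Suc L, 1) (shb ?S)) = broken_rim_hook ?S"
    using Bins1[OF shb_bnd] bnd B1 by (metis (no_types, lifting))
  show ?thesis
    by (simp add: Fw_def L_def[symmetric] cs sk ct br[simplified] Om[simplified])
next
  case False
  then show ?thesis by (simp add: Fw_def)
qed

lemma Z1: "Fw w (1 # t) (0 # s) = 0"
proof (cases "Suc (cnt t) = cnt s")
  case True
  define L where "L = cnt s"
  have sl: "supp (L - 1) (label t)" using supp_label True L_def by (metis diff_Suc_1)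
  have "\<not> contained (sh L (label s)) (label t)"
    by (rule Z1lab[OF sl]) (use True L_def in simp)
  then show ?thesis by (simp add: Fw_def L_def)
next
  case False
  then show ?thesis by (simp add: Fw_def)
qed

lemma Z2: "Fw w (0 # 0 # t) (1 # 1 # s) = 0"
proof (cases "cnt t = Suc (Suc (cnt s))")
  case True
  define L where "L = cnt t"
  have sm: "supp (L - 2) (label s)" using supp_label True L_def by simp
  have "\<not> broken_rim_hook (skew (sh L (sh L (label t))) (label s))"
    by (rule Z2lab[OF sm]) (use True L_def in simp)
  then show ?thesis by (simp add: Fw_def L_def)
next
  case False
  then show ?thesis by (simp add: Fw_def)
qed

lemma label_Nil: "label [] = (\<lambda>_. 0)"
  by (rule ext) (simp add: label_alt)

lemma F_Nil: "Fw w [] [] = 1"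
proof -
  have "skew (\<lambda>_. 0) (\<lambda>_. 0) = {}" by (auto simp: mem_skew)
  moreover have "components {} = {}" by (simp add: components_def)
  ultimately show ?thesis
    by (simp add: Fw_def label_Nil contained_def broken_rim_hook_def Omega_gen_def cbar_def rbar_def)
qed

lemma F_01: "Fw w [0] [1] = 0" by (simp add: Fw_def)

lemma K1: "cnt t = cnt s \<Longrightarrow> cardsk (0 # t) (0 # s) = cardsk t s"
proof -
  assume c: "cnt t = cnt s"
  have sl: "supp (cnt t) (label t)" and sm: "supp (cnt t) (label s)" using supp_label c by metis+
  show ?thesis
    using SK1[OF sl sm] c by (simp add: cardsk_def shb_def card_image[OF inj_on_subset[OF inj_sf]])
qed

lemma K2: "cardsk (1 # t) (1 # s) = cardsk t s" by (simp add: cardsk_def)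

lemma K3: "cnt t = Suc (cnt s) \<Longrightarrow> cardsk (0 # 0 # t) (1 # 0 # s) = Suc (cardsk (0 # t) (1 # s))"
proof -
  assume True: "cnt t = Suc (cnt s)"
  define M where "M = cnt s"
  define L where "L = Suc M"
  have ct': "cnt t = L" using True L_def M_def by simp
  have L1: "1 \<le> L" using L_def by simp
  have sl: "supp L (label t)" using supp_label ct' by metis
  have sm: "supp (L - 1) (label s)" using supp_label L_def M_def by simp
  let ?S = "skew (sh L (label t)) (label s)"
  have sl2: "supp L (sh L (label t))" by (rule supp_sh)
  have fin: "finite ?S" using finite_skew[OF sl2] .
  have bnd: "\<forall>q\<in>?S. 1 \<le> snd q \<and> fst q \<le> L" using skew_bnd[OF sl2] by blast
  have sk: "skew (sh L (sh L (label t))) (sh M (label s)) = insert (L, 1) (shb ?S)"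
    using SK3[OF sl sm L1] L_def by simp
  have nin: "(L, 1) \<notin> shb ?S" using bnd by (force simp: mem_shb)
  have "card (insert (L, 1) (shb ?S)) = Suc (card ?S)"
    using nin fin by (simp add: finite_shb shb_def card_image[OF inj_on_subset[OF inj_sf]])
  then show ?thesis by (simp add: cardsk_def ct' M_def[symmetric] L_def[symmetric] sk)
qed

lemma K4: "cnt t = Suc (cnt s) \<Longrightarrow> cardsk (0 # 1 # t) (1 # 1 # s) = Suc (cardsk (0 # t) (1 # s))"
proof -
  assume True: "cnt t = Suc (cnt s)"
  define M where "M = cnt s"
  define L where "L = Suc M"
  have ct': "cnt t = L" using True L_def M_def by simp
  have sl: "supp L (label t)" using supp_label ct' by metis
  have sm: "supp (L - 1) (label s)" using supp_label L_def M_def by simp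
  have sm': "supp L (label s)" using supp_mono[OF sm] by simp
  let ?S = "skew (sh L (label t)) (label s)"
  have sl2: "supp L (sh L (label t))" by (rule supp_sh)
  have fin: "finite ?S" using finite_skew[OF sl2] .
  have bnd: "\<forall>q\<in>?S. 1 \<le> snd q \<and> fst q \<le> L" using skew_bnd[OF sl2] by blast
  have sk: "skew (sh (Suc L) (label t)) (label s) = insert (Suc L, 1) ?S"
    by (rule SK4[OF sl sm'])
  have nin: "(Suc L, 1) \<notin> ?S" using bnd by force
  have "card (insert (Suc L, 1) ?S) = Suc (card ?S)" using nin fin by simp
  then show ?thesis by (simp add: cardsk_def ct' M_def[symmetric] L_def[symmetric] sk)
qed

lemma K5: "cnt t = cnt s \<Longrightarrow> cardsk (0 # 1 # t) (1 # 0 # s) = Suc (cardsk t s)"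
proof -
  assume True: "cnt t = cnt s"
  define L where "L = cnt t"
  have cs: "cnt s = L" using True L_def by simp
  have sl: "supp L (label t)" and sm: "supp L (label s)" using supp_label L_def cs by metis+
  let ?S = "skew (label t) (label s)"
  have fin: "finite ?S" using finite_skew[OF sl] .
  have bnd: "\<forall>q\<in>?S. 1 \<le> snd q \<and> fst q \<le> L" using skew_bnd[OF sl] by blast
  have sk: "skew (sh (Suc L) (label t)) (sh L (label s)) = insert (Suc L, 1) (shb ?S)"
    by (rule SK5[OF sl sm])
  have nin: "(Suc L, 1) \<notin> shb ?S" using bnd by (force simp: mem_shb)
  have "card (insert (Suc L, 1) (shb ?S)) = Suc (card ?S)"
    using nin fin by (simp add: finite_shb shb_def card_image[OF inj_on_subset[OF inj_sf]])
  then show ?thesis by (simp add: cardsk_def L_def[symmetric] cs sk)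
qed


lemma Rmat_vals:
  "Rmat 0 0 0 0 = omega 1" "Rmat 0 1 0 1 = omega 3" "Rmat 0 0 0 1 = 0" "Rmat 0 1 0 0 = 0"
  "Rmat 1 0 0 1 = omega 6" "Rmat 1 0 0 0 = 0" "Rmat 1 1 0 0 = 0" "Rmat 1 1 0 1 = 0"
  "Rmat 0 1 1 0 = omega 5" "Rmat 0 0 1 0 = 0" "Rmat 0 0 1 1 = 0" "Rmat 0 1 1 1 = 0"
  "Rmat 1 0 1 0 = omega 4" "Rmat 1 1 1 1 = omega 2" "Rmat 1 0 1 1 = 0" "Rmat 1 1 1 0 = 0"
  by (simp_all add: Rmat_def tens_def madd_def msmult_def eu_def)

lemma Rmat_vals':
  "Rmat 0 0 0 0 = omega 1" "Rmat 0 (Suc 0) 0 (Suc 0) = omega 3" "Rmat 0 0 0 (Suc 0) = 0" "Rmat 0 (Suc 0) 0 0 = 0"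
  "Rmat (Suc 0) 0 0 (Suc 0) = omega 6" "Rmat (Suc 0) 0 0 0 = 0" "Rmat (Suc 0) (Suc 0) 0 0 = 0" "Rmat (Suc 0) (Suc 0) 0 (Suc 0) = 0"
  "Rmat 0 (Suc 0) (Suc 0) 0 = omega 5" "Rmat 0 0 (Suc 0) 0 = 0" "Rmat 0 0 (Suc 0) (Suc 0) = 0" "Rmat 0 (Suc 0) (Suc 0) (Suc 0) = 0"
  "Rmat (Suc 0) 0 (Suc 0) 0 = omega 4" "Rmat (Suc 0) (Suc 0) (Suc 0) (Suc 0) = omega 2" "Rmat (Suc 0) 0 (Suc 0) (Suc 0) = 0" "Rmat (Suc 0) (Suc 0) (Suc 0) 0 = 0"
  by (simp_all add: Rmat_def tens_def madd_def msmult_def eu_def)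

lemma Tmat_Cons: "Tmat (y # t) (x # s) b a = Tmat t s b 0 * Rmat 0 y a x + Tmat t s b 1 * Rmat 1 y a x"
  by simp

definition wb :: "nat \<Rightarrow> mpoly" where
  "wb = (\<lambda>i. if i = 1 then omega 4 else if i = 2 then omega 3 else if i = 3 then omega 2
          else if i = 4 then omega 1 else if i = 5 then omega 6 else if i = 6 then omega 5 else 0)"

lemma wb_vals: "wb 1 = omega 4" "wb 2 = omega 3" "wb 3 = omega 2" "wb 4 = omega 1" "wb 5 = omega 6" "wb 6 = omega 5"
  by (simp_all add: wb_def)

lemma Omegabar_wb: "Omegabar l n b = Omega_gen wb l n b"
  by (simp add: Omegabar_def wb_def)

definition Agood :: "mpoly \<Rightarrow> nat list \<Rightarrow> nat list \<Rightarrow> bool" where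
  "Agood p u v \<longleftrightarrow> (p \<noteq> 0 \<longrightarrow> (\<exists>m. p = Poly_Mapping.single m 1 \<and> deg246 m = cardsk u v))"

definition Dgood :: "mpoly \<Rightarrow> nat list \<Rightarrow> nat list \<Rightarrow> bool" where
  "Dgood p u v \<longleftrightarrow> (p \<noteq> 0 \<longrightarrow> (\<exists>m. p = Poly_Mapping.single m 1 \<and> deg246 m + cardsk u v = length u))"

lemma deg246_add: "deg246 (a + b) = deg246 a + deg246 b"
  by (simp add: deg246_def lookup_add)

lemma deg246_single: "deg246 (Poly_Mapping.single i 1) = (if i = 2 \<or> i = 4 \<or> i = 6 then 1 else 0)"
  by (auto simp: deg246_def lookup_single)

lemma omega_mult_single: "omega i * Poly_Mapping.single m 1 = Poly_Mapping.single (Poly_Mapping.single i 1 + m) 1"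
  by (simp add: omega_def mult_single)

lemma Fw_nz_cnt: "Fw w t s \<noteq> 0 \<Longrightarrow> cnt t = cnt s"
  by (simp add: Fw_def split: if_splits)


lemma Agood_mult:
  assumes "Agood p u v" "p \<noteq> 0 \<Longrightarrow> cardsk u' v' = cardsk u v + deg246 (Poly_Mapping.single i 1)"
  shows "Agood (omega i * p) u' v'"
proof (cases "p = 0")
  case False
  then obtain m where m: "p = Poly_Mapping.single m 1" "deg246 m = cardsk u v" using assms(1) by (auto simp: Agood_def)
  then show ?thesis using assms(2)[OF False] unfolding Agood_def
    by (intro impI exI[of _ "Poly_Mapping.single i 1 + m"]) (simp add: omega_mult_single deg246_add)
qed (simp add: Agood_def)

lemma Dgood_mult:
  assumes "Dgood p u v" "p \<noteq> 0 \<Longrightarrow> cardsk u' v' + length u + deg246 (Poly_Mapping.single i 1) = cardsk u v + length u'"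
  shows "Dgood (omega i * p) u' v'"
proof (cases "p = 0")
  case False
  then obtain m where m: "p = Poly_Mapping.single m 1" "deg246 m + cardsk u v = length u" using assms(1) by (auto simp: Dgood_def)
  then show ?thesis using assms(2)[OF False] unfolding Dgood_def
    by (intro impI exI[of _ "Poly_Mapping.single i 1 + m"]) (simp add: omega_mult_single deg246_add; linarith)
qed (simp add: Dgood_def)

lemma Fw_Cons_nz: "Fw w (0 # t) (1 # s) \<noteq> 0 \<Longrightarrow> cnt t = Suc (cnt s)"
  using Fw_nz_cnt by fastforce

lemmas Fsimps = F1 F2 F3 F4 F5 Z1 Z2 F1[simplified] F2[simplified] F3[simplified] F4[simplified] F5[simplified] Z1[simplified] Z2[simplified]

lemmas Ks = K1 K2 K3 K4 K5 K1[simplified] K2[simplified] K3[simplified] K4[simplified] K5[simplified] Fw_Cons_nz Fw_Cons_nz[simplified]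

lemma mainA:
  "length t = length s \<Longrightarrow> set t \<subseteq> {0, 1} \<Longrightarrow> set s \<subseteq> {0, 1} \<Longrightarrow>
   Tmat t s 0 0 = Fw omega t s \<and> omega 6 * Tmat t s 0 1 = Fw omega (0 # t) (1 # s) \<and>
   Agood (Fw omega t s) t s \<and> Agood (Fw omega (0 # t) (1 # s)) (0 # t) (1 # s)"
proof (induction t s rule: list_induct2)
  case Nil
  have e: "skew (\<lambda>_. 0) (\<lambda>_. 0) = {}" by (auto simp: mem_skew)
  have a1: "Agood (Fw omega [] []) [] []" unfolding Agood_def F_Nil cardsk_def label_Nil e
    by (intro impI exI[of _ 0]) (simp add: deg246_def)
  have a2: "Agood (Fw omega [0] [1]) [0] [1]" unfolding F_01 by (simp add: Agood_def)
  show ?case using a1 a2 F_Nil F_01 by simp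
next
  case (Cons y t x s)
  then have IH: "Tmat t s 0 0 = Fw omega t s" "omega 6 * Tmat t s 0 1 = Fw omega (0 # t) (1 # s)"
    "Agood (Fw omega t s) t s" "Agood (Fw omega (0 # t) (1 # s)) (0 # t) (1 # s)" by auto
  have y: "y = 0 \<or> y = 1" and x: "x = 0 \<or> x = 1" using Cons.prems by auto
  show ?case
  proof (cases "y = 0")
    case y0: True
    show ?thesis
    proof (cases "x = 0")
      case x0: True
      have a: "Tmat (y # t) (x # s) 0 0 = Fw omega (y # t) (x # s)"
        using IH(1) by (simp add: y0 x0 Rmat_vals Rmat_vals' Fsimps)
      have b: "omega 6 * Tmat (y # t) (x # s) 0 1 = Fw omega (0 # y # t) (1 # x # s)"
        using IH(2) by (simp add: y0 x0 Rmat_vals Rmat_vals' Fsimps ac_simps)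
      have c: "Agood (Fw omega (y # t) (x # s)) (y # t) (x # s)"
        unfolding y0 x0 F1 by (rule Agood_mult[OF IH(3)]) (simp add: Ks Fw_nz_cnt deg246_single deg246_single[simplified])
      have d: "Agood (Fw omega (0 # y # t) (1 # x # s)) (0 # y # t) (1 # x # s)"
        unfolding y0 x0 F3 by (rule Agood_mult[OF IH(4)]) (simp add: Ks  deg246_single deg246_single[simplified])
      show ?thesis using a b c d by simp
    next
      case x1: False
      then have x1: "x = 1" using x by simp
      have a: "Tmat (y # t) (x # s) 0 0 = Fw omega (y # t) (x # s)"
        using IH(2) by (simp add: y0 x1 Rmat_vals Rmat_vals' ac_simps)
      have b: "omega 6 * Tmat (y # t) (x # s) 0 1 = Fw omega (0 # y # t) (1 # x # s)"
        by (simp add: y0 x1 Rmat_vals Rmat_vals' Fsimps)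
      have c: "Agood (Fw omega (y # t) (x # s)) (y # t) (x # s)"
        using IH(4) by (simp add: y0 x1)
      have d: "Agood (Fw omega (0 # y # t) (1 # x # s)) (0 # y # t) (1 # x # s)"
        by (simp add: y0 x1 Fsimps Agood_def)
      show ?thesis using a b c d by simp
    qed
  next
    case y1: False
    then have y1: "y = 1" using y by simp
    show ?thesis
    proof (cases "x = 0")
      case x0: True
      have a: "Tmat (y # t) (x # s) 0 0 = Fw omega (y # t) (x # s)"
        by (simp add: y1 x0 Rmat_vals Rmat_vals' Fsimps)
      have b: "omega 6 * Tmat (y # t) (x # s) 0 1 = Fw omega (0 # y # t) (1 # x # s)"
        using IH(1) by (simp add: y1 x0 Rmat_vals Rmat_vals' Fsimps ac_simps)
      have c: "Agood (Fw omega (y # t) (x # s)) (y # t) (x # s)"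
        by (simp add: y1 x0 Fsimps Agood_def)
      have d: "Agood (Fw omega (0 # y # t) (1 # x # s)) (0 # y # t) (1 # x # s)"
        unfolding y1 x0 F5 mult.assoc
        by (rule Agood_mult[OF Agood_mult[OF IH(3)]]) (simp_all add: Ks Fw_nz_cnt deg246_single deg246_single[simplified])
      show ?thesis using a b c d by simp
    next
      case x1: False
      then have x1: "x = 1" using x by simp
      have a: "Tmat (y # t) (x # s) 0 0 = Fw omega (y # t) (x # s)"
        using IH(1) by (simp add: y1 x1 Rmat_vals Rmat_vals' Fsimps)
      have b: "omega 6 * Tmat (y # t) (x # s) 0 1 = Fw omega (0 # y # t) (1 # x # s)"
        using IH(2) by (simp add: y1 x1 Rmat_vals Rmat_vals' Fsimps ac_simps)
      have c: "Agood (Fw omega (y # t) (x # s)) (y # t) (x # s)"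
        unfolding y1 x1 F2 by (rule Agood_mult[OF IH(3)]) (simp add: Ks deg246_single deg246_single[simplified])
      have d: "Agood (Fw omega (0 # y # t) (1 # x # s)) (0 # y # t) (1 # x # s)"
        unfolding y1 x1 F4 by (rule Agood_mult[OF IH(4)]) (simp add: Ks  deg246_single deg246_single[simplified])
      show ?thesis using a b c d by simp
    qed
  qed
qed


lemma mainD:
  "length t = length s \<Longrightarrow> set t \<subseteq> {0, 1} \<Longrightarrow> set s \<subseteq> {0, 1} \<Longrightarrow>
   Tmat t s 1 1 = Fw wb s t \<and> omega 5 * Tmat t s 1 0 = Fw wb (0 # s) (1 # t) \<and>
   Dgood (Fw wb s t) s t \<and> Dgood (Fw wb (0 # s) (1 # t)) (0 # s) (1 # t)"
proof (induction t s rule: list_induct2)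
  case Nil
  have e: "skew (\<lambda>_. 0) (\<lambda>_. 0) = {}" by (auto simp: mem_skew)
  have a1: "Dgood (Fw wb [] []) [] []" unfolding Dgood_def F_Nil cardsk_def label_Nil e
    by (intro impI exI[of _ 0]) (simp add: deg246_def)
  have a2: "Dgood (Fw wb [0] [1]) [0] [1]" unfolding F_01 by (simp add: Dgood_def)
  show ?case using a1 a2 F_Nil F_01 by simp
next
  case (Cons y t x s)
  then have IH: "Tmat t s 1 1 = Fw wb s t" "omega 5 * Tmat t s 1 0 = Fw wb (0 # s) (1 # t)"
    "Dgood (Fw wb s t) s t" "Dgood (Fw wb (0 # s) (1 # t)) (0 # s) (1 # t)" by auto
  have y: "y = 0 \<or> y = 1" and x: "x = 0 \<or> x = 1" using Cons.prems by auto
  show ?case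
  proof (cases "y = 0")
    case y0: True
    show ?thesis
    proof (cases "x = 0")
      case x0: True
      have a: "Tmat (y # t) (x # s) 1 1 = Fw wb (x # s) (y # t)"
        using IH(1) by (simp add: y0 x0 Rmat_vals Rmat_vals' Fsimps wb_vals wb_vals[simplified] ac_simps)
      have b: "omega 5 * Tmat (y # t) (x # s) 1 0 = Fw wb (0 # x # s) (1 # y # t)"
        using IH(2) by (simp add: y0 x0 Rmat_vals Rmat_vals' Fsimps wb_vals wb_vals[simplified] ac_simps)
      have c: "Dgood (Fw wb (x # s) (y # t)) (x # s) (y # t)"
        unfolding y0 x0 F1 wb_vals by (rule Dgood_mult[OF IH(3)]) (simp add: Ks Fw_nz_cnt deg246_single deg246_single[simplified])
      have d: "Dgood (Fw wb (0 # x # s) (1 # y # t)) (0 # x # s) (1 # y # t)"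
        unfolding y0 x0 F3 wb_vals by (rule Dgood_mult[OF IH(4)]) (simp add: Ks deg246_single deg246_single[simplified])
      show ?thesis using a b c d by simp
    next
      case x1: False
      then have x1: "x = 1" using x by simp
      have a: "Tmat (y # t) (x # s) 1 1 = Fw wb (x # s) (y # t)"
        by (simp add: y0 x1 Rmat_vals Rmat_vals' Fsimps)
      have b: "omega 5 * Tmat (y # t) (x # s) 1 0 = Fw wb (0 # x # s) (1 # y # t)"
        using IH(1) by (simp add: y0 x1 Rmat_vals Rmat_vals' Fsimps wb_vals wb_vals[simplified] ac_simps)
      have c: "Dgood (Fw wb (x # s) (y # t)) (x # s) (y # t)"
        by (simp add: y0 x1 Fsimps Dgood_def)
      have d: "Dgood (Fw wb (0 # x # s) (1 # y # t)) (0 # x # s) (1 # y # t)"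
        unfolding y0 x1 F5 wb_vals mult.assoc
      proof (rule Dgood_mult[OF Dgood_mult[OF IH(3)]])
        show "cardsk s t + length s + deg246 (Poly_Mapping.single 5 1) = cardsk s t + length s"
          by (simp add: deg246_single deg246_single[simplified])
        assume "omega 5 * Fw wb s t \<noteq> 0"
        then have "Fw wb s t \<noteq> 0" by auto
        then have "cnt s = cnt t" by (rule Fw_nz_cnt)
        then show "cardsk (0 # 1 # s) (1 # 0 # t) + length s + deg246 (Poly_Mapping.single 6 1) = cardsk s t + length (0 # 1 # s)"
          using K5[of s t] by (simp add: deg246_single deg246_single[simplified])
      qed
      show ?thesis using a b c d by simp
    qed
  next
    case y1: False
    then have y1: "y = 1" using y by simp
    show ?thesis
    proof (cases "x = 0")
      case x0: True
      have a: "Tmat (y # t) (x # s) 1 1 = Fw wb (x # s) (y # t)"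
        using IH(2) by (simp add: y1 x0 Rmat_vals Rmat_vals' ac_simps)
      have b: "omega 5 * Tmat (y # t) (x # s) 1 0 = Fw wb (0 # x # s) (1 # y # t)"
        by (simp add: y1 x0 Rmat_vals Rmat_vals' Fsimps)
      have c: "Dgood (Fw wb (x # s) (y # t)) (x # s) (y # t)"
        using IH(4) by (simp add: y1 x0)
      have d: "Dgood (Fw wb (0 # x # s) (1 # y # t)) (0 # x # s) (1 # y # t)"
        by (simp add: y1 x0 Fsimps Dgood_def)
      show ?thesis using a b c d by simp
    next
      case x1: False
      then have x1: "x = 1" using x by simp
      have a: "Tmat (y # t) (x # s) 1 1 = Fw wb (x # s) (y # t)"
        using IH(1) by (simp add: y1 x1 Rmat_vals Rmat_vals' Fsimps wb_vals wb_vals[simplified] ac_simps)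
      have b: "omega 5 * Tmat (y # t) (x # s) 1 0 = Fw wb (0 # x # s) (1 # y # t)"
        using IH(2) by (simp add: y1 x1 Rmat_vals Rmat_vals' Fsimps wb_vals wb_vals[simplified] ac_simps)
      have c: "Dgood (Fw wb (x # s) (y # t)) (x # s) (y # t)"
        unfolding y1 x1 F2 wb_vals by (rule Dgood_mult[OF IH(3)]) (simp add: Ks deg246_single deg246_single[simplified])
      have d: "Dgood (Fw wb (0 # x # s) (1 # y # t)) (0 # x # s) (1 # y # t)"
        unfolding y1 x1 F4 wb_vals by (rule Dgood_mult[OF IH(4)]) (simp add: Ks deg246_single deg246_single[simplified])
      show ?thesis using a b c d by simp
    qed
  qed
qed


lemma Rmat_bad: "y \<noteq> 0 \<Longrightarrow> y \<noteq> 1 \<Longrightarrow> Rmat c y a x = 0"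
  by (simp add: Rmat_def tens_def madd_def msmult_def eu_def)

lemma Tmat_len: "length t \<noteq> length s \<Longrightarrow> Tmat t s b a = 0"
proof (induction t arbitrary: s a)
  case Nil then show ?case by (cases s) auto
next
  case (Cons y t) then show ?case by (cases s) auto
qed

lemma Tmat_bad: "length t = length s \<Longrightarrow> \<not> set t \<subseteq> {0, 1} \<Longrightarrow> Tmat t s b a = 0"
proof (induction t s arbitrary: a rule: list_induct2)
  case Nil then show ?case by simp
next
  case (Cons y t x s)
  show ?case
  proof (cases "y = 0 \<or> y = 1")
    case True
    then have "\<not> set t \<subseteq> {0, 1}" using Cons.prems by auto
    then show ?thesis using Cons.IH by simp
  next
    case False
    then show ?thesis by (simp add: Rmat_bad)
  qed
qed

lemma hcomp_0: "hcomp r 0 = 0"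
  by (rule poly_mapping_eqI) (simp add: hcomp_def lookup_mapp)

lemma hcomp_single: "hcomp r (Poly_Mapping.single m 1) = (if deg246 m = r then Poly_Mapping.single m 1 else 0)"
  by (rule poly_mapping_eqI) (auto simp: hcomp_def lookup_mapp lookup_single when_def)

lemma sum_fun_apply: "(\<Sum>a\<in>S. f a) x = (\<Sum>a\<in>S. f a x)"
proof (cases "finite S")
  case True then show ?thesis by (induction S rule: finite_induct) auto
qed simp

lemma mono_chain: "(\<forall>i\<ge>1. f (i + 1) \<le> (f i :: nat)) \<Longrightarrow> 1 \<le> j \<Longrightarrow> j \<le> (k::nat) \<Longrightarrow> f k \<le> f j"
proof (induction k)
  case 0 then show ?case by simp
next
  case (Suc k)
  show ?case
  proof (cases "j = Suc k")
    case True then show ?thesis by simp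
  next
    case False
    then have "j \<le> k" "1 \<le> k" using Suc.prems by auto
    then have "f k \<le> f j" using Suc by simp
    moreover have "f (Suc k) \<le> f k" using Suc.prems(1) \<open>1 \<le> k\<close> by auto
    ultimately show ?thesis by simp
  qed
qed

lemma label_Ppart: "label s \<in> Ppart (cnt s) (length s)"
proof (induction s)
  case Nil then show ?case by (simp add: Ppart_def label_Nil)
next
  case (Cons x s)
  show ?case
  proof (cases "x = 1")
    case True
    then show ?thesis using Cons.IH by (auto simp: Ppart_def)
  next
    case False
    have le: "cnt s \<le> length s" by (rule cnt_le)
    have "label (x # s) = sh (cnt s) (label s)" using False by (rule label_Cons0)
    moreover have "sh (cnt s) (label s) \<in> Ppart (cnt s) (Suc (length s))"
      using Cons.IH le unfolding Ppart_def sh_def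
      by (auto simp: Suc_diff_le)
    ultimately show ?thesis using False by (simp add: cnt_Cons)
  qed
qed


lemma strings_Cons: "x # s \<in> strings (Suc n) \<longleftrightarrow> (x = 0 \<or> x = 1) \<and> s \<in> strings n"
  by (auto simp: strings_def)

lemma exists_string:
  "la \<in> Ppart l n \<Longrightarrow> l \<le> n \<Longrightarrow> \<exists>s. s \<in> strings n \<and> cnt s = l \<and> label s = la"
proof (induction n arbitrary: l la)
  case 0
  then have "l = 0" by simp
  moreover have "la = (\<lambda>_. 0)" using 0 by (auto simp: Ppart_def)
  ultimately show ?case by (intro exI[of _ "[]"]) (simp add: strings_def label_Nil)
next
  case (Suc m)
  have P: "\<forall>i\<ge>1. la (i + 1) \<le> la i" "la 0 = 0" "\<forall>i>l. la i = 0" "\<forall>i. la i \<le> Suc m - l"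
    using Suc.prems(1) by (auto simp: Ppart_def)
  show ?case
  proof (cases "1 \<le> l \<and> la l = 0")
    case True
    have A: "\<forall>i>l - 1. la i = 0"
    proof (intro allI impI)
      fix i assume "l - 1 < i"
      then have "i = l \<or> l < i" using True by auto
      then show "la i = 0" using True P(3) by auto
    qed
    have e: "Suc m - l = m - (l - 1)" using True by (cases l) auto
    have B: "\<forall>i. la i \<le> m - (l - 1)" using P(4) unfolding e .
    have "la \<in> Ppart (l - 1) m"
      unfolding Ppart_def using P(1,2) A B by blast
    moreover have "l - 1 \<le> m" using Suc.prems(2) by simp
    ultimately obtain s where s: "s \<in> strings m" "cnt s = l - 1" "label s = la" using Suc.IH by blast
    show ?thesis
      by (rule exI[of _ "1 # s"]) (use s True in \<open>auto simp: strings_Cons\<close>)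
  next
    case False
    have lm: "l \<le> m"
    proof (rule ccontr)
      assume "\<not> l \<le> m"
      then have "l = Suc m" using Suc.prems(2) by simp
      then have "la l = 0" using P(4) by (metis diff_self_eq_0 le_zero_eq)
      with False \<open>l = Suc m\<close> show False by simp
    qed
    define la' where "la' = (\<lambda>j. if 1 \<le> j \<and> j \<le> l then la j - 1 else 0)"
    have pos: "1 \<le> la j" if "1 \<le> j" "j \<le> l" for j
    proof -
      have "la l \<le> la j" using mono_chain[OF P(1) that] .
      moreover have "1 \<le> la l" using False that by auto
      ultimately show ?thesis by simp
    qed
    have m1: "\<forall>i\<ge>1. la' (i + 1) \<le> la' i"
    proof (intro allI impI)
      fix i :: nat assume "1 \<le> i"
      then show "la' (i + 1) \<le> la' i" using P(1) by (auto simp: la'_def diff_le_mono)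
    qed
    have m2: "\<forall>i. la' i \<le> m - l"
    proof
      fix i
      have "la i \<le> Suc m - l" using P(4) by blast
      then show "la' i \<le> m - l" using lm by (auto simp: la'_def)
    qed
    have "la' \<in> Ppart l m"
      unfolding Ppart_def using m1 m2 by (auto simp: la'_def)
    then obtain s where s: "s \<in> strings m" "cnt s = l" "label s = la'" using Suc.IH lm by blast
    have "sh l la' = la"
    proof
      fix j show "sh l la' j = la j"
        using pos[of j] P(2,3) by (cases "1 \<le> j \<and> j \<le> l") (auto simp: sh_def la'_def not_le)
    qed
    then show ?thesis
      by (intro exI[of _ "0 # s"]) (use s in \<open>auto simp: strings_Cons\<close>)
  qed
qed


lemma sh_inj:
  assumes "supp l f" "supp l g" "sh l f = sh l g" shows "f = g"
proof
  fix j
  show "f j = g j"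
  proof (cases "1 \<le> j \<and> j \<le> l")
    case True
    then show ?thesis using fun_cong[OF assms(3), of j] by (simp add: sh_def)
  next
    case False
    then show ?thesis using suppD[OF assms(1), of j] suppD[OF assms(2), of j] by auto
  qed
qed

lemma mix_neq:
  assumes "Suc (cnt t1) = cnt t2" shows "label t1 \<noteq> sh (cnt t2) (label t2)"
proof
  assume e: "label t1 = sh (cnt t2) (label t2)"
  let ?L = "cnt t2"
  have "label t1 ?L = 0" using label_supp[of ?L t1] assms by simp
  moreover have "sh ?L (label t2) ?L \<ge> 1" using assms by (simp add: sh_def)
  ultimately show False using e by simp
qed

lemma unique_string:
  "s1 \<in> strings n \<Longrightarrow> s2 \<in> strings n \<Longrightarrow> cnt s1 = cnt s2 \<Longrightarrow> label s1 = label s2 \<Longrightarrow> s1 = s2"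
proof (induction n arbitrary: s1 s2)
  case 0 then show ?case by (simp add: strings_def)
next
  case (Suc n)
  obtain x1 t1 where s1: "s1 = x1 # t1" using Suc.prems(1) by (cases s1) (auto simp: strings_def)
  obtain x2 t2 where s2: "s2 = x2 # t2" using Suc.prems(2) by (cases s2) (auto simp: strings_def)
  have x1: "x1 = 0 \<or> x1 = 1" and t1: "t1 \<in> strings n" using Suc.prems(1) s1 strings_Cons by auto
  have x2: "x2 = 0 \<or> x2 = 1" and t2: "t2 \<in> strings n" using Suc.prems(2) s2 strings_Cons by auto
  have c: "cnt (x1 # t1) = cnt (x2 # t2)" and l: "label (x1 # t1) = label (x2 # t2)"
    using Suc.prems(3,4) s1 s2 by auto
  show ?case
  proof (cases "x1 = 1")
    case True
    show ?thesis
    proof (cases "x2 = 1")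
      case True
      then show ?thesis using \<open>x1 = 1\<close> c l Suc.IH[OF t1 t2] s1 s2 by simp
    next
      case False
      then have "x2 = 0" using x2 by simp
      then show ?thesis using \<open>x1 = 1\<close> c l mix_neq[of t1 t2] by simp
    qed
  next
    case False
    then have "x1 = 0" using x1 by simp
    show ?thesis
    proof (cases "x2 = 1")
      case True
      then show ?thesis using \<open>x1 = 0\<close> c l mix_neq[of t2 t1] by simp
    next
      case False
      then have "x2 = 0" using x2 by simp
      then have "cnt t1 = cnt t2" "sh (cnt t1) (label t1) = sh (cnt t1) (label t2)"
        using \<open>x1 = 0\<close> c l by simp_all
      then have "label t1 = label t2" using sh_inj supp_label by metis
      then show ?thesis using \<open>x1 = 0\<close> \<open>x2 = 0\<close> \<open>cnt t1 = cnt t2\<close> Suc.IH[OF t1 t2] s1 s2 by simp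
    qed
  qed
qed


lemma vlam_alt: "vlam n l la t = (if t \<in> strings n \<and> cnt t = l \<and> label t = la then 1 else 0)"
  by (simp add: vlam_def cnt_def)

lemma finite_strings: "finite (strings n)"
proof -
  have "strings n = {xs. set xs \<subseteq> {0, 1} \<and> length xs = n}" by (auto simp: strings_def)
  then show ?thesis using finite_lists_length_eq[of "{0, 1::nat}" n] by simp
qed

lemma finite_Ppart: "l \<le> n \<Longrightarrow> finite (Ppart l n)"
proof -
  assume ln: "l \<le> n"
  have "Ppart l n \<subseteq> label ` strings n"
  proof
    fix la assume "la \<in> Ppart l n"
    then obtain s where s: "s \<in> strings n" "label s = la" using exists_string[OF _ ln] by blast
    show "la \<in> label ` strings n" using imageI[OF s(1), of label] s(2) by simp
  qed
  then show ?thesis by (rule finite_subset[OF _ finite_imageI[OF finite_strings]])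
qed

lemma LHS_eval:
  assumes "s0 \<in> strings n" "cnt s0 = l" "label s0 = la"
  shows "opapply n M (vlam n l la) t = M t s0"
proof -
  have v: "vlam n l la s = (if s = s0 then 1 else 0)" if "s \<in> strings n" for s
  proof (cases "s = s0")
    case True then show ?thesis using assms by (simp add: vlam_alt)
  next
    case False
    have "\<not> (cnt s = l \<and> label s = la)"
    proof
      assume "cnt s = l \<and> label s = la"
      then have "s = s0" using unique_string[OF that assms(1)] assms(2,3) by simp
      with False show False by simp
    qed
    then show ?thesis using False by (simp add: vlam_alt)
  qed
  have "opapply n M (vlam n l la) t = (\<Sum>s\<in>strings n. if s = s0 then M t s else 0)"
    unfolding opapply_def by (rule sum.cong) (simp_all add: v)
  also have "\<dots> = M t s0" using finite_strings assms(1) by simp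
  finally show ?thesis .
qed

lemma RHS_eval:
  assumes "l \<le> n"
  shows "(\<Sum>la\<in>{la \<in> Ppart l n. P la}. (\<lambda>t. g la * vlam n l la t)) t =
    (if t \<in> strings n \<and> cnt t = l \<and> P (label t) then g (label t) else 0)"
proof -
  have fin: "finite {la \<in> Ppart l n. P la}" using finite_Ppart[OF assms] by simp
  have "(\<Sum>la\<in>{la \<in> Ppart l n. P la}. (\<lambda>t. g la * vlam n l la t)) t = (\<Sum>la\<in>{la \<in> Ppart l n. P la}. g la * vlam n l la t)"
    by (rule sum_fun_apply)
  also have "\<dots> = (if t \<in> strings n \<and> cnt t = l \<and> P (label t) then g (label t) else 0)"
  proof (cases "t \<in> strings n \<and> cnt t = l")
    case True
    then have lp: "label t \<in> Ppart l n" using label_Ppart[of t] by (auto simp: strings_def)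
    have "(\<Sum>la\<in>{la \<in> Ppart l n. P la}. g la * vlam n l la t) = (\<Sum>la\<in>{la \<in> Ppart l n. P la}. if label t = la then g la else 0)"
      by (rule sum.cong) (auto simp: vlam_alt True)
    also have "\<dots> = (if label t \<in> {la \<in> Ppart l n. P la} then g (label t) else 0)"
      using fin by (simp add: sum.delta)
    finally show ?thesis using True lp by simp
  next
    case False
    then show ?thesis by (auto simp: vlam_alt)
  qed
  finally show ?thesis .
qed


lemma partA:
  assumes ln: "l \<le> n" and mu: "\<mu> \<in> Ppart l n"
  shows "opapply n (Acomp r) (vlam n l \<mu>) =
           (\<Sum>la\<in>{la \<in> Ppart l n. contained \<mu> la \<and> broken_rim_hook (skew la \<mu>)
                       \<and> card (skew la \<mu>) = r}.
              (\<lambda>\<tau>. Omega l n (skew la \<mu>) * vlam n l la \<tau>))"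
proof
  fix t
  obtain s0 where s0: "s0 \<in> strings n" "cnt s0 = l" "label s0 = \<mu>" using exists_string[OF mu ln] by blast
  have L: "opapply n (Acomp r) (vlam n l \<mu>) t = hcomp r (Tmat t s0 0 0)"
    using LHS_eval[OF s0] by (simp add: Acomp_def Aop_def)
  have R: "(\<Sum>la\<in>{la \<in> Ppart l n. contained \<mu> la \<and> broken_rim_hook (skew la \<mu>) \<and> card (skew la \<mu>) = r}.
              (\<lambda>\<tau>. Omega l n (skew la \<mu>) * vlam n l la \<tau>)) t =
     (if t \<in> strings n \<and> cnt t = l \<and> (contained \<mu> (label t) \<and> broken_rim_hook (skew (label t) \<mu>) \<and> card (skew (label t) \<mu>) = r)
      then Omega l n (skew (label t) \<mu>) else 0)"
    by (rule RHS_eval[OF ln])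
  show "opapply n (Acomp r) (vlam n l \<mu>) t = (\<Sum>la\<in>{la \<in> Ppart l n. contained \<mu> la \<and> broken_rim_hook (skew la \<mu>) \<and> card (skew la \<mu>) = r}.
              (\<lambda>\<tau>. Omega l n (skew la \<mu>) * vlam n l la \<tau>)) t"
    unfolding L R
  proof (cases "t \<in> strings n")
    case True
    have lt: "length t = length s0" and st: "set t \<subseteq> {0, 1}" and ss: "set s0 \<subseteq> {0, 1}" and lt': "length t = n"
      using True s0(1) by (auto simp: strings_def)
    have M: "Tmat t s0 0 0 = Fw omega t s0" "Agood (Fw omega t s0) t s0" using mainA[OF lt st ss] by auto
    show "hcomp r (Tmat t s0 0 0) = (if t \<in> strings n \<and> cnt t = l \<and> (contained \<mu> (label t) \<and> broken_rim_hook (skew (label t) \<mu>) \<and> card (skew (label t) \<mu>) = r)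
      then Omega l n (skew (label t) \<mu>) else 0)"
    proof (cases "Fw omega t s0 = 0")
      case z: True
      have "cnt t = l \<and> contained \<mu> (label t) \<and> broken_rim_hook (skew (label t) \<mu>) \<Longrightarrow> Omega l n (skew (label t) \<mu>) = 0"
        using z s0 lt' by (simp add: Fw_def Omega_def)
      then show ?thesis using M(1) z by (auto simp: hcomp_0)
    next
      case nz: False
      then obtain m where m: "Fw omega t s0 = Poly_Mapping.single m 1" "deg246 m = cardsk t s0"
        using M(2) by (auto simp: Agood_def)
      have cond: "cnt t = l" "contained \<mu> (label t)" "broken_rim_hook (skew (label t) \<mu>)"
        using nz s0 by (auto simp: Fw_def split: if_splits)
      have F: "Fw omega t s0 = Omega l n (skew (label t) \<mu>)"
        using cond s0 lt' by (simp add: Fw_def Omega_def)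
      show ?thesis using M(1) m cond F True by (simp add: hcomp_single cardsk_def s0(3))
    qed
  next
    case False
    have "Tmat t s0 0 0 = 0"
    proof (cases "length t = length s0")
      case True
      then have "\<not> set t \<subseteq> {0, 1}" using False s0(1) by (auto simp: strings_def)
      then show ?thesis using Tmat_bad True by blast
    next
      case False
      then show ?thesis by (rule Tmat_len)
    qed
    then show "hcomp r (Tmat t s0 0 0) = (if t \<in> strings n \<and> cnt t = l \<and> (contained \<mu> (label t) \<and> broken_rim_hook (skew (label t) \<mu>) \<and> card (skew (label t) \<mu>) = r)
      then Omega l n (skew (label t) \<mu>) else 0)"
      using False by (simp add: hcomp_0)
  qed
qed


lemma partD:
  assumes ln: "l \<le> n" and mu: "\<mu> \<in> Ppart l n" and rn: "r \<le> n"
  shows "opapply n (Dcomp r) (vlam n l \<mu>) =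
           (\<Sum>la\<in>{la \<in> Ppart l n. contained la \<mu> \<and> broken_rim_hook (skew \<mu> la)
                       \<and> card (skew \<mu> la) = n - r}.
              (\<lambda>\<tau>. Omegabar l n (skew \<mu> la) * vlam n l la \<tau>))"
proof
  fix t
  obtain s0 where s0: "s0 \<in> strings n" "cnt s0 = l" "label s0 = \<mu>" using exists_string[OF mu ln] by blast
  have ls0: "length s0 = n" using s0(1) by (simp add: strings_def)
  have L: "opapply n (Dcomp r) (vlam n l \<mu>) t = hcomp r (Tmat t s0 1 1)"
    using LHS_eval[OF s0] by (simp add: Dcomp_def Dop_def)
  have R: "(\<Sum>la\<in>{la \<in> Ppart l n. contained la \<mu> \<and> broken_rim_hook (skew \<mu> la) \<and> card (skew \<mu> la) = n - r}.
              (\<lambda>\<tau>. Omegabar l n (skew \<mu> la) * vlam n l la \<tau>)) t =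
     (if t \<in> strings n \<and> cnt t = l \<and> (contained (label t) \<mu> \<and> broken_rim_hook (skew \<mu> (label t)) \<and> card (skew \<mu> (label t)) = n - r)
      then Omegabar l n (skew \<mu> (label t)) else 0)"
    by (rule RHS_eval[OF ln])
  show "opapply n (Dcomp r) (vlam n l \<mu>) t = (\<Sum>la\<in>{la \<in> Ppart l n. contained la \<mu> \<and> broken_rim_hook (skew \<mu> la) \<and> card (skew \<mu> la) = n - r}.
              (\<lambda>\<tau>. Omegabar l n (skew \<mu> la) * vlam n l la \<tau>)) t"
    unfolding L R
  proof (cases "t \<in> strings n")
    case True
    have lt: "length t = length s0" and st: "set t \<subseteq> {0, 1}" and ss: "set s0 \<subseteq> {0, 1}" and lt': "length t = n"
      using True s0(1) by (auto simp: strings_def)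
    have M: "Tmat t s0 1 1 = Fw wb s0 t" "Dgood (Fw wb s0 t) s0 t" using mainD[OF lt st ss] by auto
    show "hcomp r (Tmat t s0 1 1) = (if t \<in> strings n \<and> cnt t = l \<and> (contained (label t) \<mu> \<and> broken_rim_hook (skew \<mu> (label t)) \<and> card (skew \<mu> (label t)) = n - r)
      then Omegabar l n (skew \<mu> (label t)) else 0)"
    proof (cases "Fw wb s0 t = 0")
      case z: True
      have "cnt t = l \<and> contained (label t) \<mu> \<and> broken_rim_hook (skew \<mu> (label t)) \<Longrightarrow> Omegabar l n (skew \<mu> (label t)) = 0"
        using z s0 ls0 by (simp add: Fw_def Omegabar_wb)
      then show ?thesis using M(1) z by (auto simp: hcomp_0)
    next
      case nz: False
      then obtain m where m: "Fw wb s0 t = Poly_Mapping.single m 1" "deg246 m + cardsk s0 t = length s0"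
        using M(2) by (auto simp: Dgood_def)
      have cond: "cnt t = l" "contained (label t) \<mu>" "broken_rim_hook (skew \<mu> (label t))"
        using nz s0 by (auto simp: Fw_def split: if_splits)
      have F: "Fw wb s0 t = Omegabar l n (skew \<mu> (label t))"
        using cond s0 ls0 by (simp add: Fw_def Omegabar_wb)
      have eq: "deg246 m = r \<longleftrightarrow> card (skew \<mu> (label t)) = n - r"
        using m(2) ls0 rn s0(3) by (auto simp: cardsk_def)
      show ?thesis using M(1) m(1) cond F True eq by (simp add: hcomp_single)
    qed
  next
    case False
    have "Tmat t s0 1 1 = 0"
    proof (cases "length t = length s0")
      case True
      then have "\<not> set t \<subseteq> {0, 1}" using False s0(1) by (auto simp: strings_def)
      then show ?thesis using Tmat_bad True by blast
    next
      case False
      then show ?thesis by (rule Tmat_len)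
    qed
    then show "hcomp r (Tmat t s0 1 1) = (if t \<in> strings n \<and> cnt t = l \<and> (contained (label t) \<mu> \<and> broken_rim_hook (skew \<mu> (label t)) \<and> card (skew \<mu> (label t)) = n - r)
      then Omegabar l n (skew \<mu> (label t)) else 0)"
      using False by (simp add: hcomp_0)
  qed
qed

theorem proposition4p5:
  fixes l n :: nat and \<mu> :: "nat \<Rightarrow> nat"
  assumes "l \<le> n" and "\<mu> \<in> Ppart l n"
  shows "(\<forall>r. (1 \<le> r \<and> r \<le> n - 1) \<or> r = 0 \<longrightarrow>
           opapply n (Acomp r) (vlam n l \<mu>) =
           (\<Sum>la\<in>{la \<in> Ppart l n. contained \<mu> la \<and> broken_rim_hook (skew la \<mu>)
                       \<and> card (skew la \<mu>) = r}.
              (\<lambda>\<tau>. Omega l n (skew la \<mu>) * vlam n l la \<tau>))) \<and>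
         (\<forall>r. (1 \<le> r \<and> r \<le> n - 1) \<or> r = n \<longrightarrow>
           opapply n (Dcomp r) (vlam n l \<mu>) =
           (\<Sum>la\<in>{la \<in> Ppart l n. contained la \<mu> \<and> broken_rim_hook (skew \<mu> la)
                       \<and> card (skew \<mu> la) = n - r}.
              (\<lambda>\<tau>. Omegabar l n (skew \<mu> la) * vlam n l la \<tau>)))"
proof (intro conjI allI impI)
  fix r :: nat
  show "opapply n (Acomp r) (vlam n l \<mu>) =
           (\<Sum>la\<in>{la \<in> Ppart l n. contained \<mu> la \<and> broken_rim_hook (skew la \<mu>)
                       \<and> card (skew la \<mu>) = r}.
              (\<lambda>\<tau>. Omega l n (skew la \<mu>) * vlam n l la \<tau>))"
    by (rule partA[OF assms])
next
  fix r :: nat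
  assume "(1 \<le> r \<and> r \<le> n - 1) \<or> r = n"
  then have "r \<le> n" by auto
  then show "opapply n (Dcomp r) (vlam n l \<mu>) =
           (\<Sum>la\<in>{la \<in> Ppart l n. contained la \<mu> \<and> broken_rim_hook (skew \<mu> la)
                       \<and> card (skew \<mu> la) = n - r}.
              (\<lambda>\<tau>. Omegabar l n (skew \<mu> la) * vlam n l la \<tau>))"
    by (rule partD[OF assms])
qed


end
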